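(* Let $V,W$ satisfy (H2),(H3) of the context and let $\beta_N>0$ with $\beta_N/N\to\infty$. Then $(Z_NQ_N)_N$ is exponentially tight: for every $L\geq0$ there is a compact $K_L\subset\mathcal{M}_1(\mathbb{R}^d)$ with $$\limsup_{N\to\infty}\frac{\log Z_NQ_N(\mathcal{M}_1(\mathbb{R}^d)\setminus K_L)}{\beta_N}\leq-L.$$
   Context: $V:\mathbb{R}^d\to\mathbb{R}$, $W:\mathbb{R}^d\times\mathbb{R}^d\to(-\infty,+\infty]$ symmetric and finite off the diagonal. (H2) $V$ continuous, $V(x)\to\infty$ as $|x|\to\infty$, $\int e^{-V}<\infty$; (H3) $W(x,y)\geq c-\varepsilon_o(V(x)+V(y))$ for some $c\in\mathbb{R}$, $\varepsilon_o\in(0,1)$. $H_N(x_1,\dots,x_N)=\frac1N\sum_iV(x_i)+\frac1{N^2}\sum_{i<j}W(x_i,x_j)$, $Z_N=\int_{(\mathbb{R}^d)^N}e^{-\beta_NH_N}dx$ (finite for $N$ large), $P_N$ the probability with density $e^{-\beta_NH_N}/Z_N$, and $Q_N$ the law under $P_N$ of $\mu_N=\frac1N\sum_i\delta_{x_i}\in\mathcal{M}_1(\mathbb{R}^d)$ (probability measures, weak topology). *)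

theory Defs
  imports "HOL-Probability.Probability"
begin

definition prob_measures :: "('a::euclidean_space) measure set" where
  "prob_measures = {M. prob_space M \<and> sets M = sets borel}"

definition weak_top :: "('a::euclidean_space) measure topology" where
  "weak_top = topology_generated_by
     {{M \<in> prob_measures. (\<integral>x. f x \<partial>M) \<in> U} | (f :: 'a \<Rightarrow> real) U.
        continuous_on UNIV f \<and> bounded (range f) \<and> open U}"

text \<open>Empirical measure (1/N) sum_{i<N} delta_{x_i}.\<close>
definition emp_measure :: "nat \<Rightarrow> (nat \<Rightarrow> 'a::euclidean_space) \<Rightarrow> 'a measure" where
  "emp_measure N x = distr (uniform_count_measure {..<N}) borel x"

definition config_space :: "nat \<Rightarrow> (nat \<Rightarrow> 'a::euclidean_space) measure" where
  "config_space N = PiM {..<N} (\<lambda>_. lborel)"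

definition H_N :: "('a \<Rightarrow> real) \<Rightarrow> ('a \<Rightarrow> 'a \<Rightarrow> ereal) \<Rightarrow> nat \<Rightarrow> (nat \<Rightarrow> 'a) \<Rightarrow> ereal" where
  "H_N V W N x = ereal ((1 / real N) * (\<Sum>i<N. V (x i)))
     + ereal (1 / (real N)^2) * (\<Sum>(i,j)\<in>{(i,j). i < j \<and> j < N}. W (x i) (x j))"

definition gibbs_weight :: "real \<Rightarrow> ereal \<Rightarrow> ennreal" where
  "gibbs_weight b h = (if h = \<infinity> then 0 else ennreal (exp (- b * real_of_ereal h)))"

definition ZQ :: "('a::euclidean_space \<Rightarrow> real) \<Rightarrow> ('a \<Rightarrow> 'a \<Rightarrow> ereal) \<Rightarrow> (nat \<Rightarrow> real)
    \<Rightarrow> nat \<Rightarrow> 'a measure set \<Rightarrow> ennreal" where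
  "ZQ V W beta N A = (\<integral>\<^sup>+ x. indicator {x. emp_measure N x \<in> A} x
        * gibbs_weight (beta N) (H_N V W N x) \<partial>config_space N)"

definition ln_ennreal :: "ennreal \<Rightarrow> ereal" where
  "ln_ennreal z = (if z = 0 then -\<infinity> else if z = \<top> then \<infinity> else ereal (ln (enn2real z)))"

end

theory Submission
  imports Defs
begin

definition bitr :: "bool \<Rightarrow> real" where "bitr b = (if b then 1 else 0)"

lemma bitr_bounds [simp]: "0 \<le> bitr b" "bitr b \<le> 1"
  by (auto simp: bitr_def)

definition cte :: "(nat \<Rightarrow> bool) \<Rightarrow> real" where
  "cte w = (\<Sum>k. bitr (w k) / 3^(Suc k))"

lemma geom3_tail: "(\<lambda>k. 1 / 3^(Suc (k+n)) :: real) sums (1/(2*3^n))"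
proof -
  have "(\<lambda>k. (1/3::real)^k) sums (1 / (1 - 1/3))"
    by (rule geometric_sums) simp
  then have "(\<lambda>k. (1/3^(Suc n)) * (1/3::real)^k) sums ((1/3^(Suc n)) * (1 / (1 - 1/3)))"
    by (rule sums_mult)
  moreover have "(1/3^(Suc n)) * (1 / (1 - 1/3)) = (1/(2*3^n) :: real)"
    by (simp add: field_simps)
  moreover have "(\<lambda>k. (1/3^(Suc n)) * (1/3::real)^k) = (\<lambda>k. 1 / 3^(Suc (k+n)))"
    by (simp add: fun_eq_iff power_add field_simps power_one_over)
  ultimately show ?thesis by metis
qed

lemma geom3: "(\<lambda>k. 1 / 3^(Suc k) :: real) sums (1/2)"
  using geom3_tail[of 0] by simp

lemma cte_summable: "summable (\<lambda>k. bitr (w k) / 3^(Suc k))"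
  by (rule summable_comparison_test[OF _ sums_summable[OF geom3]])
     (auto intro!: exI[of _ 0] simp: divide_le_cancel)

lemma cte_bounds: "0 \<le> cte w" "cte w \<le> 1/2"
proof -
  show "0 \<le> cte w" unfolding cte_def
    by (rule suminf_nonneg[OF cte_summable]) simp
  show "cte w \<le> 1/2"
  proof -
    have "(\<Sum>k. bitr (w k) / 3^(Suc k)) \<le> (\<Sum>k. 1 / 3^(Suc k) :: real)"
      by (rule suminf_le[OF _ cte_summable sums_summable[OF geom3]]) (simp add: divide_right_mono)
    then show ?thesis using sums_unique[OF geom3] by (simp add: cte_def)
  qed
qed

definition cdiff :: "(nat \<Rightarrow> bool) \<Rightarrow> (nat \<Rightarrow> bool) \<Rightarrow> nat \<Rightarrow> real" where
  "cdiff w w' k = (bitr (w k) - bitr (w' k)) / 3^(Suc k)"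

lemma cdiff_abs: "\<bar>cdiff w w' k\<bar> \<le> 1 / 3^(Suc k)"
  by (auto simp: cdiff_def bitr_def)

lemma cdiff_summable: "summable (cdiff w w')"
  by (rule summable_comparison_test[OF _ sums_summable[OF geom3]])
     (intro exI[of _ 0] allI impI, simp only: real_norm_def cdiff_abs)

lemma cte_diff: "cte w - cte w' = suminf (cdiff w w')"
proof -
  have "(\<lambda>k. bitr (w k)/3^Suc k - bitr (w' k)/3^Suc k) sums (cte w - cte w')"
    unfolding cte_def by (intro sums_diff summable_sums cte_summable)
  moreover have "(\<lambda>k. bitr (w k)/3^Suc k - bitr (w' k)/3^Suc k) = cdiff w w'"
    by (simp add: fun_eq_iff cdiff_def diff_divide_distrib)
  ultimately show ?thesis using sums_unique by metis
qed

lemma cdiff_tail_bound: "\<bar>\<Sum>k. cdiff w w' (k + n)\<bar> \<le> 1/(2*3^n)"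
proof -
  have s: "summable (\<lambda>k. 1 / 3^(Suc (k+n)) :: real)" using sums_summable[OF geom3_tail] .
  have a: "\<And>k. norm (cdiff w w' (k+n)) \<le> 1 / 3^(Suc (k+n))" using cdiff_abs by simp
  have s2: "summable (\<lambda>k. \<bar>cdiff w w' (k + n)\<bar>)"
    by (rule summable_comparison_test[OF _ s]) (use a in auto)
  have "\<bar>\<Sum>k. cdiff w w' (k + n)\<bar> \<le> (\<Sum>k. \<bar>cdiff w w' (k + n)\<bar>)"
    by (rule summable_rabs[OF s2])
  also have "\<dots> \<le> (\<Sum>k. 1 / 3^(Suc (k+n)))"
    by (rule suminf_le[OF _ s2 s]) (use a in auto)
  also have "\<dots> = 1/(2*3^n)" using sums_unique[OF geom3_tail] by simp
  finally show ?thesis .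
qed

lemma cte_close: assumes "\<forall>i<n. w i = w' i" shows "\<bar>cte w - cte w'\<bar> \<le> 1/(2*3^n)"
proof -
  have "sum (cdiff w w') {..<n} = 0" using assms by (auto simp: cdiff_def)
  then have "cte w - cte w' = (\<Sum>k. cdiff w w' (k + n))"
    using cte_diff suminf_split_initial_segment[OF cdiff_summable, of w w' n] by simp
  then show ?thesis using cdiff_tail_bound by simp
qed

lemma cte_gap: assumes "w i \<noteq> w' i" "\<forall>j<i. w j = w' j"
  shows "1/(2*3^(Suc i)) \<le> \<bar>cte w - cte w'\<bar>"
proof -
  have "sum (cdiff w w') {..<Suc i} = cdiff w w' i" using assms(2) by (auto simp: cdiff_def)
  then have e: "cte w - cte w' = (\<Sum>k. cdiff w w' (k + Suc i)) + cdiff w w' i"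
    using cte_diff suminf_split_initial_segment[OF cdiff_summable, of w w' "Suc i"] by simp
  have "\<bar>cdiff w w' i\<bar> = 1/3^(Suc i)" using assms(1) by (cases "w i"; cases "w' i") (auto simp: cdiff_def bitr_def)
  moreover have "\<bar>\<Sum>k. cdiff w w' (k + Suc i)\<bar> \<le> 1/(2*3^(Suc i))" by (rule cdiff_tail_bound)
  moreover have "\<bar>cdiff w w' i\<bar> - \<bar>\<Sum>k. cdiff w w' (k + Suc i)\<bar> \<le> \<bar>(\<Sum>k. cdiff w w' (k + Suc i)) + cdiff w w' i\<bar>"
    by arith
  moreover have "1/(2*3^(Suc i)) = 1/3^(Suc i) - 1/(2*3^(Suc i)::real)" by simp
  ultimately show ?thesis unfolding e by linarith
qed

lemma cte_agree: assumes "\<bar>cte w - cte w'\<bar> < 1/(2*3^n)" shows "\<forall>i<n. w i = w' i"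
proof (rule ccontr)
  assume "\<not> ?thesis"
  then have ex: "\<exists>i. i < n \<and> w i \<noteq> w' i" by auto
  obtain i where i0: "i < n \<and> w i \<noteq> w' i" "\<forall>m<i. \<not> (m < n \<and> w m \<noteq> w' m)"
    using ex exists_least_iff[of "\<lambda>i. i < n \<and> w i \<noteq> w' i"] by blast
  have i: "i < n" "w i \<noteq> w' i" using i0(1) by auto
  have lt: "\<forall>j<i. w j = w' j" using i0 by auto
  have p: "(3::real)^Suc i \<le> 3^n" by (rule power_increasing) (use i(1) in auto)
  have "1/(2*3^n) \<le> (1/(2*3^(Suc i)) :: real)"
    by (rule divide_left_mono) (use p in auto)
  also have "\<dots> \<le> \<bar>cte w - cte w'\<bar>" by (rule cte_gap[OF i(2) lt])
  finally show False using assms by simp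
qed

lemma cte_inj: "cte w = cte w' \<Longrightarrow> w = w'"
proof
  fix i assume "cte w = cte w'"
  then have "\<forall>j<Suc i. w j = w' j" by (intro cte_agree) simp
  then show "w i = w' i" by simp
qed

definition binv :: "(nat \<Rightarrow> bool) \<Rightarrow> real" where
  "binv w = (\<Sum>k. bitr (w k) / 2^(Suc k))"

lemma geom2_tail: "(\<lambda>k. 1 / 2^(Suc (k+n)) :: real) sums (1/2^n)"
proof -
  have "(\<lambda>k. (1/2::real)^k) sums (1 / (1 - 1/2))"
    by (rule geometric_sums) simp
  then have "(\<lambda>k. (1/2^(Suc n)) * (1/2::real)^k) sums ((1/2^(Suc n)) * (1 / (1 - 1/2)))"
    by (rule sums_mult)
  moreover have "(1/2^(Suc n)) * (1 / (1 - 1/2)) = (1/2^n :: real)"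
    by (simp add: field_simps)
  moreover have "(\<lambda>k. (1/2^(Suc n)) * (1/2::real)^k) = (\<lambda>k. 1 / 2^(Suc (k+n)))"
    by (simp add: fun_eq_iff power_add field_simps power_one_over)
  ultimately show ?thesis by metis
qed

lemma geom2: "(\<lambda>k. 1 / 2^(Suc k) :: real) sums 1"
  using geom2_tail[of 0] by simp

lemma binv_summable: "summable (\<lambda>k. bitr (w k) / 2^(Suc k))"
  by (rule summable_comparison_test[OF _ sums_summable[OF geom2]])
     (auto intro!: exI[of _ 0] simp: divide_le_cancel)

lemma binv_close: assumes "\<forall>i<n. w i = w' i" shows "\<bar>binv w - binv w'\<bar> \<le> 1/2^n"
proof -
  define d where "d k = (bitr (w k) - bitr (w' k)) / 2^(Suc k)" for k
  have da: "\<bar>d k\<bar> \<le> 1 / 2^(Suc k)" for k by (auto simp: d_def bitr_def)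
  have ds: "summable d"
    by (rule summable_comparison_test[OF _ sums_summable[OF geom2]])
       (intro exI[of _ 0] allI impI, simp only: real_norm_def da)
  have "(\<lambda>k. bitr (w k)/2^Suc k - bitr (w' k)/2^Suc k) sums (binv w - binv w')"
    unfolding binv_def by (intro sums_diff summable_sums binv_summable)
  moreover have "(\<lambda>k. bitr (w k)/2^Suc k - bitr (w' k)/2^Suc k) = d"
    by (simp add: fun_eq_iff d_def diff_divide_distrib)
  ultimately have e1: "binv w - binv w' = suminf d" using sums_unique by metis
  have "sum d {..<n} = 0" using assms by (auto simp: d_def)
  then have e2: "binv w - binv w' = (\<Sum>k. d (k + n))"
    using e1 suminf_split_initial_segment[OF ds, of n] by simp
  have s: "summable (\<lambda>k. 1 / 2^(Suc (k+n)) :: real)" using sums_summable[OF geom2_tail] .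
  have a: "\<And>k. \<bar>d (k+n)\<bar> \<le> 1 / 2^(Suc (k+n))" using da by simp
  have s2: "summable (\<lambda>k. \<bar>d (k + n)\<bar>)"
    by (rule summable_comparison_test[OF _ s]) (use a in auto)
  have "\<bar>\<Sum>k. d (k + n)\<bar> \<le> (\<Sum>k. \<bar>d (k + n)\<bar>)"
    by (rule summable_rabs[OF s2])
  also have "\<dots> \<le> (\<Sum>k. 1 / 2^(Suc (k+n)))"
    by (rule suminf_le[OF _ s2 s]) (use a in auto)
  also have "\<dots> = 1/2^n" using sums_unique[OF geom2_tail] by simp
  finally show ?thesis using e2 by simp
qed

lemma floor_double:
  fixes z :: real
  shows "of_int \<lfloor>2*z\<rfloor> = 2 * of_int \<lfloor>z\<rfloor> + bitr (odd \<lfloor>2*z\<rfloor>)"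
proof -
  have a: "2 * \<lfloor>z\<rfloor> \<le> \<lfloor>2*z\<rfloor>" by (subst le_floor_iff) simp
  have b: "\<lfloor>2*z\<rfloor> \<le> 2 * \<lfloor>z\<rfloor> + 1" by (subst floor_le_iff) (simp, linarith)
  consider "\<lfloor>2*z\<rfloor> = 2 * \<lfloor>z\<rfloor>" | "\<lfloor>2*z\<rfloor> = 2 * \<lfloor>z\<rfloor> + 1" using a b by linarith
  then show ?thesis
  proof cases
    case 1 then show ?thesis by (simp add: bitr_def)
  next
    case 2 then show ?thesis by (simp add: bitr_def)
  qed
qed

lemma binv_exists: assumes "0 \<le> y" "y < (1::real)" shows "\<exists>w. binv w = y"
proof -
  define F where "F n = \<lfloor>y * 2^n\<rfloor>" for n
  define w where "w k = odd (F (Suc k))" for k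
  have step: "of_int (F (Suc n)) = 2 * of_int (F n) + bitr (w n)" for n
    using floor_double[of "y * 2^n"] unfolding F_def w_def by (simp add: mult.commute mult.left_commute)
  have F0: "F 0 = 0" using assms unfolding F_def by (simp add: floor_eq_iff)
  have ps: "(\<Sum>k<n. bitr (w k) / 2^(Suc k)) = of_int (F n) / 2^n" for n
  proof (induction n)
    case 0 then show ?case by (simp add: F0)
  next
    case (Suc n)
    then show ?case by (simp add: step field_simps)
  qed
  have lo: "y - 1/2^n \<le> of_int (F n) / 2^n" for n
  proof -
    have h: "y * 2^n - 1 \<le> of_int (F n)" unfolding F_def by linarith
    have "y - 1/2^n = (y * 2^n - 1) / 2^n" by (simp add: diff_divide_distrib)
    also have "\<dots> \<le> of_int (F n)/2^n" by (rule divide_right_mono) (use h in auto)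
    finally show ?thesis .
  qed
  have hi: "of_int (F n) / 2^n \<le> y" for n
  proof -
    have "of_int (F n) \<le> y * 2^n" unfolding F_def by linarith
    then show ?thesis by (simp add: field_simps)
  qed
  have l0: "(\<lambda>n. y - 1/2^n) \<longlonglongrightarrow> y - 0"
    by (intro tendsto_diff tendsto_const) (simp add: power_one_over[symmetric] LIMSEQ_realpow_zero)
  have "(\<lambda>n. of_int (F n) / 2^n) \<longlonglongrightarrow> y"
    by (rule tendsto_sandwich[of "\<lambda>n. y - 1/2^n" _ _ "\<lambda>_. y"]) (use l0 lo hi in auto)
  then have "(\<lambda>k. bitr (w k) / 2^(Suc k)) sums y" unfolding sums_def ps .
  then show ?thesis unfolding binv_def using sums_unique by metis
qed

definition bE :: "nat \<Rightarrow> 'a::euclidean_space" where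
  "bE = (SOME h. bij_betw h {..<DIM('a)} Basis)"

lemma bE_bij: "bij_betw (bE::nat\<Rightarrow>'a) {..<DIM('a::euclidean_space)} Basis"
proof -
  have "\<exists>h. bij_betw h {0..<card (Basis::'a set)} (Basis::'a set)"
    by (rule ex_bij_betw_nat_finite[OF finite_Basis])
  then have "\<exists>h. bij_betw h {..<DIM('a)} (Basis::'a set)" by (simp add: atLeast0LessThan)
  then show ?thesis unfolding bE_def by (rule someI_ex)
qed

lemma bE_Basis: assumes "j < DIM('a::euclidean_space)" shows "(bE j :: 'a) \<in> Basis"
  using bE_bij[where 'a='a] assms by (auto simp: bij_betw_def)

definition cmap :: "(nat \<Rightarrow> bool) \<Rightarrow> 'a::euclidean_space" where
  "cmap w = (\<Sum>j<DIM('a). binv (\<lambda>k. w (k * DIM('a) + j)) *\<^sub>R bE j)"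

lemma cmap_close:
  assumes "\<forall>i<n * DIM('a). w i = w' i"
  shows "norm (cmap w - cmap w' :: 'a::euclidean_space) \<le> DIM('a) / 2^n"
proof -
  let ?d = "DIM('a)"
  have "cmap w - (cmap w' :: 'a) = (\<Sum>j<?d. (binv (\<lambda>k. w (k * ?d + j)) - binv (\<lambda>k. w' (k * ?d + j))) *\<^sub>R (bE j :: 'a))"
    unfolding cmap_def by (simp add: sum_subtractf scaleR_diff_left)
  also have "norm \<dots> \<le> (\<Sum>j<?d. norm ((binv (\<lambda>k. w (k * ?d + j)) - binv (\<lambda>k. w' (k * ?d + j))) *\<^sub>R (bE j :: 'a)))"
    by (rule norm_sum)
  also have "\<dots> \<le> (\<Sum>j<?d. 1/2^n)"
  proof (rule sum_mono)
    fix j assume j: "j \<in> {..<?d}"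
    have nb: "norm (bE j :: 'a) = 1" using bE_Basis[where 'a='a, of j] j by auto
    have ag: "\<forall>k<n. w (k * ?d + j) = w' (k * ?d + j)"
    proof (intro allI impI)
      fix k assume k: "k < n"
      have "k * ?d + j < Suc k * ?d" using j by simp
      also have "\<dots> \<le> n * ?d" using k by (intro mult_le_mono1) simp
      finally show "w (k * ?d + j) = w' (k * ?d + j)" using assms by simp
    qed
    show "norm ((binv (\<lambda>k. w (k * ?d + j)) - binv (\<lambda>k. w' (k * ?d + j))) *\<^sub>R (bE j :: 'a)) \<le> 1/2^n"
      using binv_close[OF ag] nb by simp
  qed
  also have "\<dots> = ?d / 2^n" by simp
  finally show ?thesis .
qed

lemma cmap_surj:
  assumes "\<forall>b\<in>Basis. 0 \<le> y \<bullet> b \<and> y \<bullet> b < 1"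
  shows "\<exists>w. cmap w = (y :: 'a::euclidean_space)"
proof -
  let ?d = "DIM('a)"
  have "\<forall>j. \<exists>v. j < ?d \<longrightarrow> binv v = y \<bullet> bE j"
    using assms bE_Basis binv_exists by blast
  then obtain V where V: "\<And>j. j < ?d \<Longrightarrow> binv (V j) = y \<bullet> bE j" by metis
  define w where "w i = V (i mod ?d) (i div ?d)" for i
  have wj: "(\<lambda>k. w (k * ?d + j)) = V j" if "j < ?d" for j
    using that by (simp add: fun_eq_iff w_def)
  have "cmap w = (\<Sum>j<?d. (y \<bullet> bE j) *\<^sub>R (bE j :: 'a))"
    unfolding cmap_def by (intro sum.cong refl) (simp add: wj V)
  also have "\<dots> = (\<Sum>b\<in>Basis. (y \<bullet> b) *\<^sub>R b)"
    by (rule sum.reindex_bij_betw[OF bE_bij])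
  also have "\<dots> = y" by (rule euclidean_representation)
  finally show ?thesis by blast
qed

lemma One_inner_Basis: "b \<in> Basis \<Longrightarrow> (One::'a::euclidean_space) \<bullet> b = 1"
  by (simp add: inner_sum_left inner_Basis if_distrib cong: if_cong)

definition Tset :: "real set" where "Tset = {real n + cte w | n w. True}"

definition gam :: "real \<Rightarrow> 'a::euclidean_space" where
  "gam t = (real (nat \<lfloor>t\<rfloor>) + 1) *\<^sub>R (2 *\<^sub>R cmap (SOME w. cte w = t - of_int \<lfloor>t\<rfloor>) - One)"

lemma floor_T: "\<lfloor>real n + cte w\<rfloor> = int n"
  using cte_bounds[of w] by (simp add: floor_eq_iff)

lemma gam_T: "gam (real n + cte w) = (real n + 1) *\<^sub>R (2 *\<^sub>R cmap w - One)"
proof -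
  have "(SOME w'. cte w' = real n + cte w - of_int \<lfloor>real n + cte w\<rfloor>) = w"
    unfolding floor_T by (rule some_equality) (auto intro: cte_inj)
  then show ?thesis unfolding gam_def floor_T by simp
qed

lemma Tset_nonneg: "t \<in> Tset \<Longrightarrow> 0 \<le> t"
  using cte_bounds by (auto simp: Tset_def intro: add_nonneg_nonneg)

lemma gam_surj: "\<exists>t\<in>Tset. gam t = (x::'a::euclidean_space) \<and> t \<le> norm x + 2"
proof -
  define n where "n = nat \<lceil>norm x\<rceil>"
  have n1: "norm x \<le> real n" unfolding n_def by linarith
  have n2: "real n \<le> norm x + 1"
  proof -
    have "real n = of_int \<lceil>norm x\<rceil>" unfolding n_def by simp
    then show ?thesis using of_int_ceiling_le_add_one[of "norm x"] by linarith
  qed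
  define y where "y = (1/2) *\<^sub>R ((1/(real n+1)) *\<^sub>R x + One)"
  have "\<forall>b\<in>Basis. 0 \<le> y \<bullet> b \<and> y \<bullet> b < 1"
  proof
    fix b :: 'a assume b: "b \<in> Basis"
    have yb: "y \<bullet> b = ((x \<bullet> b)/(real n + 1) + 1)/2"
      unfolding y_def using b by (simp add: inner_add_left One_inner_Basis)
    have "\<bar>x \<bullet> b\<bar> \<le> norm x" using b by (rule Basis_le_norm)
    then have "\<bar>x \<bullet> b\<bar> < real n + 1" using n1 by linarith
    then have h: "-1 < (x \<bullet> b)/(real n + 1)" "(x \<bullet> b)/(real n + 1) < 1"
      by (simp_all add: abs_less_iff field_simps)
    then show "0 \<le> y \<bullet> b \<and> y \<bullet> b < 1" unfolding yb by (simp add: field_simps)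
  qed
  then obtain w where w: "cmap w = y" using cmap_surj by blast
  have t: "real n + cte w \<in> Tset" unfolding Tset_def by blast
  have "gam (real n + cte w) = (real n + 1) *\<^sub>R (2 *\<^sub>R y - One)" unfolding gam_T w ..
  also have "\<dots> = x" unfolding y_def by (simp add: algebra_simps)
  finally show ?thesis using t cte_bounds[of w] n2 by (intro bexI[of _ "real n + cte w"]) auto
qed

lemma nat_eq_of_close: assumes "\<bar>real m - real n\<bar> < 1" shows "m = n"
proof -
  have "real m < real (n+1)" "real n < real (m+1)" using assms by (auto simp: abs_less_iff)
  then have "m < n+1" "n < m+1" by (simp_all only: of_nat_less_iff)
  then show ?thesis by linarith
qed

lemma gam_cont: "continuous_on Tset (gam :: real \<Rightarrow> 'a::euclidean_space)"
  unfolding continuous_on_iff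
proof (intro ballI allI impI)
  fix t0 and e :: real assume t0: "t0 \<in> Tset" and e: "0 < e"
  obtain n w0 where t0e: "t0 = real n + cte w0" using t0 unfolding Tset_def by blast
  let ?d = "DIM('a)"
  obtain k where k: "2 * (real n + 1) * ?d / e < 2^k" using real_arch_pow[of 2] by auto
  have k': "2 * (real n + 1) * ?d / 2^k < e" using k e by (simp add: field_simps)
  define \<delta> where "\<delta> = min (1/4) (1/(2*3^(k*?d)) :: real)"
  have "\<delta> > 0" unfolding \<delta>_def by simp
  moreover have "\<forall>t'\<in>Tset. dist t' t0 < \<delta> \<longrightarrow> dist (gam t' :: 'a) (gam t0) < e"
  proof (intro ballI impI)
    fix t' assume t': "t' \<in> Tset" and dt: "dist t' t0 < \<delta>"
    obtain m w where t'e: "t' = real m + cte w" using t' unfolding Tset_def by blast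
    have "\<bar>real m - real n\<bar> < 1"
      using dt cte_bounds[of w] cte_bounds[of w0] unfolding t'e t0e dist_real_def \<delta>_def by linarith
    then have mn: "m = n" by (rule nat_eq_of_close)
    have "\<bar>cte w - cte w0\<bar> < 1/(2*3^(k*?d))"
      using dt unfolding t'e t0e mn dist_real_def \<delta>_def by simp
    then have "\<forall>i<k*?d. w i = w0 i" by (rule cte_agree)
    then have cc: "norm (cmap w - cmap w0 :: 'a) \<le> ?d / 2^k" by (rule cmap_close)
    have "dist (gam t' :: 'a) (gam t0) = norm ((real n + 1) *\<^sub>R (2 *\<^sub>R (cmap w - cmap w0 :: 'a)))"
      unfolding t'e t0e mn gam_T dist_norm by (simp add: algebra_simps)
    also have "\<dots> = 2 * (real n + 1) * norm (cmap w - cmap w0 :: 'a)" by simp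
    also have "\<dots> \<le> 2 * (real n + 1) * (?d / 2^k)" by (rule mult_left_mono[OF cc]) simp
    also have "\<dots> < e" using k' by simp
    finally show "dist (gam t' :: 'a) (gam t0) < e" .
  qed
  ultimately show "\<exists>\<delta>>0. \<forall>t'\<in>Tset. dist t' t0 < \<delta> \<longrightarrow> dist (gam t' :: 'a) (gam t0) < e" by blast
qed

lemma range_cte_closed: "closed (range cte)"
  unfolding closed_sequential_limits
proof (intro allI impI)
  fix x l assume a: "(\<forall>n. x n \<in> range cte) \<and> x \<longlonglongrightarrow> l"
  then have "\<forall>i. \<exists>w. x i = cte w" by (auto simp: image_iff)
  from choice[OF this] obtain ws where ws0: "\<forall>i. x i = cte (ws i)" by blast
  have ws: "\<And>i. x i = cte (ws i)" using ws0 by blast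
  have "(\<lambda>i. cte (ws i)) = x" using ws by (simp add: fun_eq_iff)
  then have lim: "(\<lambda>i. cte (ws i)) \<longlonglongrightarrow> l" using a by simp
  have "\<forall>k. \<exists>N. \<forall>i\<ge>N. \<bar>cte (ws i) - l\<bar> < 1/(4*3^k)"
  proof
    fix k :: nat
    have "(1/(4*3^k) :: real) > 0" by simp
    from LIMSEQ_D[OF lim this] show "\<exists>N. \<forall>i\<ge>N. \<bar>cte (ws i) - l\<bar> < 1/(4*3^k)" by simp
  qed
  from choice[OF this] obtain N where N0: "\<forall>k. \<forall>i\<ge>N k. \<bar>cte (ws i) - l\<bar> < 1/(4*3^k)" by blast
  have N: "\<And>k i. i \<ge> N k \<Longrightarrow> \<bar>cte (ws i) - l\<bar> < 1/(4*3^k)" using N0 by blast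
  define N' where "N' k = (\<Sum>j\<le>k. N j)" for k
  have N'N: "N k \<le> N' k" for k unfolding N'_def by (rule member_le_sum) auto
  have N'mono: "N' j \<le> N' k" if "j \<le> k" for j k
    unfolding N'_def using that by (intro sum_mono2) auto
  have close: "\<forall>i'<k. ws i i' = ws j i'" if "i \<ge> N k" "j \<ge> N k" for i j k
  proof (rule cte_agree)
    have "\<bar>cte (ws i) - l\<bar> < 1/(4*3^k)" "\<bar>cte (ws j) - l\<bar> < 1/(4*3^k)" using N that by auto
    moreover have "1/(2*3^k) = 1/(4*3^k) + 1/(4*3^k :: real)" by simp
    ultimately show "\<bar>cte (ws i) - cte (ws j)\<bar> < 1/(2*3^k)" by linarith
  qed
  define w where "w k = ws (N' (Suc k)) k" for k
  have agree: "\<forall>j<k. ws i j = w j" if "i \<ge> N' k" for i k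
  proof (intro allI impI)
    fix j assume j: "j < k"
    have "N (Suc j) \<le> i" using N'N[of "Suc j"] N'mono[of "Suc j" k] j that by linarith
    moreover have "N (Suc j) \<le> N' (Suc j)" by (rule N'N)
    ultimately have "\<forall>i'<Suc j. ws i i' = ws (N' (Suc j)) i'" by (rule close)
    then show "ws i j = w j" unfolding w_def by simp
  qed
  have "(\<lambda>i. cte (ws i)) \<longlonglongrightarrow> cte w"
  proof (rule LIMSEQ_I)
    fix r :: real assume r: "0 < r"
    obtain k where k: "1/r < 3^k" using real_arch_pow[of 3 "1/r"] by auto
    have kr: "1/(2*3^k) < r" using k r by (simp add: field_simps)
    have "\<forall>i\<ge>N' k. norm (cte (ws i) - cte w) < r"
    proof (intro allI impI)
      fix i assume "N' k \<le> i"
      then have "\<bar>cte (ws i) - cte w\<bar> \<le> 1/(2*3^k)" using agree by (intro cte_close) auto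
      then show "norm (cte (ws i) - cte w) < r" using kr by simp
    qed
    then show "\<exists>no. \<forall>i\<ge>no. norm (cte (ws i) - cte w) < r" by blast
  qed
  then have "l = cte w" using lim LIMSEQ_unique by blast
  then show "l \<in> range cte" by simp
qed

lemma Tset_closed: "closed Tset"
  unfolding closed_sequential_limits
proof (intro allI impI)
  fix x l assume a: "(\<forall>n. x n \<in> Tset) \<and> x \<longlonglongrightarrow> l"
  then have "\<forall>i. \<exists>nw. x i = real (fst nw) + cte (snd nw)" unfolding Tset_def by fastforce
  from choice[OF this] obtain f where f: "\<forall>i. x i = real (fst (f i)) + cte (snd (f i))" by blast
  define ns where "ns i = fst (f i)" for i
  define ws where "ws i = snd (f i)" for i
  have nw: "\<And>i. x i = real (ns i) + cte (ws i)" using f unfolding ns_def ws_def by blast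
  have lim: "x \<longlonglongrightarrow> l" using a by simp
  obtain i0 where i0: "\<And>i. i \<ge> i0 \<Longrightarrow> \<bar>x i - l\<bar> < 1/8"
    using LIMSEQ_D[OF lim, of "1/8"] by auto
  have nsi: "ns i = ns i0" if "i \<ge> i0" for i
  proof (rule nat_eq_of_close)
    have "\<bar>x i - l\<bar> < 1/8" "\<bar>x i0 - l\<bar> < 1/8" using i0 that by auto
    then show "\<bar>real (ns i) - real (ns i0)\<bar> < 1"
      using cte_bounds[of "ws i"] cte_bounds[of "ws i0"] unfolding nw by linarith
  qed
  have "(\<lambda>i. x (i + i0)) \<longlonglongrightarrow> l" using LIMSEQ_ignore_initial_segment[OF lim] .
  then have "(\<lambda>i. x (i + i0) - real (ns i0)) \<longlonglongrightarrow> l - real (ns i0)"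
    by (intro tendsto_diff tendsto_const)
  moreover have "x (i + i0) - real (ns i0) = cte (ws (i + i0))" for i
  proof -
    have e: "ns (i+i0) = ns i0" by (rule nsi) simp
    show ?thesis using nw[of "i+i0"] unfolding e by simp
  qed
  ultimately have "(\<lambda>i. cte (ws (i + i0))) \<longlonglongrightarrow> l - real (ns i0)" by simp
  then have "l - real (ns i0) \<in> range cte"
    by (rule closed_sequentially[OF range_cte_closed, rotated]) simp
  then obtain w where "l - real (ns i0) = cte w" by blast
  then have "l = real (ns i0) + cte w" by simp
  then show "l \<in> Tset" unfolding Tset_def by blast
qed

lemma Tset_compact: "compact (Tset \<inter> {0..s})"
  by (intro closed_Int_compact compact_Icc Tset_closed)

abbreviation "UI \<equiv> restrict_space lborel {0..<1::real}"

lemma UI_space: "space UI = {0..<1}" by (simp add: space_restrict_space)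

lemma UI_sets: "A \<subseteq> {0..<1} \<Longrightarrow> A \<in> sets borel \<Longrightarrow> A \<in> sets UI"
  by (subst sets_restrict_space_iff) auto

lemma UI_measure: "A \<subseteq> {0..<1} \<Longrightarrow> measure UI A = measure lborel A"
  by (rule measure_restrict_space) auto

lemma UI_prob: "prob_space UI"
proof
  show "emeasure UI (space UI) = 1"
    unfolding UI_space by (subst emeasure_restrict_space) auto
qed

lemma UI_finite: "finite_measure UI"
  using UI_prob by (simp add: prob_space_def)

lemma key_step:
  fixes g :: "real \<Rightarrow> real" and \<tau> q0 :: "real \<Rightarrow> real" and S :: "real set"
  assumes uc: "\<And>s. uniformly_continuous_on (S \<inter> {0..s}) g"
    and gB: "\<And>t. \<bar>g t\<bar> \<le> B"
    and taumono: "mono_on {0..<1} \<tau>"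
    and q0mono: "mono_on {0..<1} q0"
    and q0S: "\<And>u. u \<in> {0..<1} \<Longrightarrow> q0 u \<in> S \<and> 0 \<le> q0 u \<and> q0 u \<le> \<tau> u"
    and meas0: "(\<lambda>u. g (q0 u)) \<in> borel_measurable UI"
    and e: "\<epsilon> > 0"
  shows "\<exists>F \<delta>. finite F \<and> F \<subseteq> {0..<1} \<and> \<delta> > 0 \<and>
     (\<forall>q. mono_on {0..<1} q \<longrightarrow> (\<forall>u\<in>{0..<1}. q u \<in> S \<and> 0 \<le> q u \<and> q u \<le> \<tau> u)
        \<longrightarrow> (\<lambda>u. g (q u)) \<in> borel_measurable UI
        \<longrightarrow> (\<forall>u\<in>F. \<bar>q u - q0 u\<bar> < \<delta>)
        \<longrightarrow> \<bar>(\<integral>u. g (q u) \<partial>UI) - (\<integral>u. g (q0 u) \<partial>UI)\<bar> < \<epsilon>)"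
proof -
  interpret fm: finite_measure UI by (rule UI_finite)
  have B0: "0 \<le> B" using gB[of 0] by linarith
  define B' where "B' = B + 1"
  have B'pos: "B' > 0" unfolding B'_def using B0 by simp
  define \<eta> where "\<eta> = min (1/2) (\<epsilon>/(8*B'))"
  have eta: "0 < \<eta>" "\<eta> \<le> 1/2" "\<eta> \<le> \<epsilon>/(8*B')" unfolding \<eta>_def using e B'pos by auto
  have eI: "1 - \<eta> \<in> {0..<1}" using eta by auto
  have eta1: "\<eta> \<le> 1" "\<eta> < 1" using eta by linarith+
  define s where "s = \<tau> (1 - \<eta>)"
  have s0: "0 \<le> s" using q0S[OF eI] unfolding s_def by linarith
  obtain \<delta>0 where d0: "\<delta>0 > 0"
    and d0c: "\<And>x x'. x \<in> S \<inter> {0..s} \<Longrightarrow> x' \<in> S \<inter> {0..s} \<Longrightarrow> dist x' x < \<delta>0 \<Longrightarrow> dist (g x') (g x) < \<epsilon>/4"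
    using uc[of s] e unfolding uniformly_continuous_on_def by (metis zero_less_divide_iff zero_less_numeral)
  obtain m :: nat where m: "16 * B' * (s+1) / (\<delta>0 * \<epsilon>) < real m" using reals_Archimedean2 by blast
  have mpos: "real m > 0"
    using m B'pos s0 d0 e by (smt (verit) divide_pos_pos mult_pos_pos)
  have m': "4 * B' * (s+1) / (\<delta>0 * real m) < \<epsilon>/4"
    using m mpos d0 e by (simp add: field_simps)
  define uu where "uu j = real j * (1 - \<eta>) / real m" for j :: nat
  have uu_mono: "uu i \<le> uu j" if "i \<le> j" for i j
    unfolding uu_def using that eta mpos by (intro divide_right_mono mult_right_mono) auto
  have uuI: "uu j \<in> {0..<1}" if "j \<le> m" for j
  proof -
    have "uu j \<le> uu m" by (rule uu_mono[OF that])
    also have "uu m = 1 - \<eta>" unfolding uu_def using mpos by simp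
    finally have "uu j \<le> 1 - \<eta>" .
    moreover have "0 \<le> uu j" unfolding uu_def using eta by simp
    ultimately show ?thesis using eta by auto
  qed
  have uum: "uu m = 1 - \<eta>" unfolding uu_def using mpos by simp
  have uu0: "uu 0 = 0" unfolding uu_def by simp
  define F where "F = uu ` {..m}"
  define osc where "osc j = q0 (uu (Suc j)) - q0 (uu j)" for j
  have osc0: "0 \<le> osc j" if "j < m" for j
    unfolding osc_def using uuI[of j] uuI[of "Suc j"] that
    by (auto intro!: mono_onD[OF q0mono] uu_mono simp del: atLeastLessThan_iff)
  define J where "J = {j. j < m \<and> \<delta>0/2 \<le> osc j}"
  have Jfin: "finite J" unfolding J_def by simp
  have Jcard: "real (card J) * (\<delta>0/2) \<le> s"
  proof -
    have "real (card J) * (\<delta>0/2) = (\<Sum>j\<in>J. \<delta>0/2)" by simp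
    also have "\<dots> \<le> (\<Sum>j\<in>J. osc j)" by (rule sum_mono) (simp add: J_def)
    also have "\<dots> \<le> (\<Sum>j<m. osc j)" by (rule sum_mono2) (auto simp: J_def osc0)
    also have "\<dots> = q0 (uu m) - q0 (uu 0)" unfolding osc_def by (rule sum_lessThan_telescope)
    also have "\<dots> \<le> s"
      using q0S[OF eI] q0S[of 0] unfolding uum uu0 s_def by auto
    finally show ?thesis .
  qed
  define Bad where "Bad = {1-\<eta>..<1} \<union> (\<Union>j\<in>J. {uu j .. uu (Suc j)})"
  have BadI: "Bad \<subseteq> {0..<1}"
  proof -
    have "{uu j .. uu (Suc j)} \<subseteq> {0..<1}" if "j \<in> J" for j
      using uuI[of j] uuI[of "Suc j"] that unfolding J_def by auto
    then show ?thesis unfolding Bad_def using eta by auto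
  qed
  have Bad_sets: "Bad \<in> sets UI" using BadI unfolding Bad_def by (intro UI_sets) (auto intro!: sets.Un sets.finite_UN Jfin)
  have Bad_meas: "measure UI Bad \<le> \<eta> + real (card J) * (1 - \<eta>) / real m"
  proof -
    have s1: "{1-\<eta>..<1} \<in> sets UI" by (intro UI_sets) (use eta1 eta in auto)
    have s2: "(\<Union>j\<in>J. {uu j .. uu (Suc j)}) \<in> sets UI" 
      using BadI unfolding Bad_def by (intro UI_sets) (auto intro!: sets.finite_UN Jfin)
    have "measure UI Bad \<le> measure UI {1-\<eta>..<1} + measure UI (\<Union>j\<in>J. {uu j .. uu (Suc j)})"
      unfolding Bad_def by (rule measure_Un_le[OF s1 s2])
    also have "measure UI {1-\<eta>..<1} = \<eta>" by (subst UI_measure) (use eta eta1 in auto)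
    also have "measure UI (\<Union>j\<in>J. {uu j .. uu (Suc j)}) \<le> (\<Sum>j\<in>J. measure UI {uu j .. uu (Suc j)})"
      using BadI unfolding Bad_def
      by (intro fm.finite_measure_subadditive_finite Jfin) (auto intro!: UI_sets)
    also have "\<dots> = (\<Sum>j\<in>J. (1 - \<eta>) / real m)"
    proof (rule sum.cong[OF refl])
      fix j assume j: "j \<in> J"
      have "{uu j .. uu (Suc j)} \<subseteq> {0..<1}" using BadI j unfolding Bad_def by auto
      then have "measure UI {uu j .. uu (Suc j)} = uu (Suc j) - uu j"
        by (subst UI_measure) (use \<open>{uu j .. uu (Suc j)} \<subseteq> {0..<1}\<close> uu_mono[of j "Suc j"] in auto)
      also have "\<dots> = (1 - \<eta>) / real m" unfolding uu_def using mpos by (simp add: field_simps)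
      finally show "measure UI {uu j .. uu (Suc j)} = (1 - \<eta>) / real m" .
    qed
    also have "\<dots> = real (card J) * (1 - \<eta>) / real m" by simp
    finally show ?thesis by simp
  qed
  have Bad_small: "2 * B * measure UI Bad \<le> \<epsilon>/2"
  proof -
    have cJ: "real (card J) \<le> 2 * s / \<delta>0" using Jcard d0 by (simp add: field_simps)
    have "real (card J) * (1 - \<eta>) / real m \<le> (2 * s / \<delta>0) / real m"
      using cJ eta mpos by (intro divide_right_mono) (auto intro: mult_le_one order_trans[OF mult_right_le_one_le])
    then have "measure UI Bad \<le> \<eta> + (2 * s / \<delta>0) / real m" using Bad_meas by linarith
    then have "2 * B * measure UI Bad \<le> 2 * B * (\<eta> + (2 * s / \<delta>0) / real m)"
      using B0 by (intro mult_left_mono) auto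
    also have "\<dots> \<le> 2 * B' * (\<epsilon>/(8*B')) + 2 * B' * ((2 * (s+1) / \<delta>0) / real m)"
      unfolding distrib_left B'_def using B0 eta d0 mpos s0
      by (intro add_mono mult_mono divide_right_mono divide_right_mono) (auto simp: B'_def)
    also have "2 * B' * (\<epsilon>/(8*B')) = \<epsilon>/4" using B'pos by simp
    also have "2 * B' * ((2 * (s+1) / \<delta>0) / real m) = 4 * B' * (s+1) / (\<delta>0 * real m)" by simp
    finally show ?thesis using m' by linarith
  qed
  show ?thesis
  proof (intro exI conjI allI impI)
    show "finite F" unfolding F_def by simp
    show "F \<subseteq> {0..<1}" unfolding F_def using uuI by auto
    show "\<delta>0/2 > 0" using d0 by simp
    fix q assume qmono: "mono_on {0..<1} q"
      and qS: "\<forall>u\<in>{0..<1}. q u \<in> S \<and> 0 \<le> q u \<and> q u \<le> \<tau> u"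
      and meas: "(\<lambda>u. g (q u)) \<in> borel_measurable UI"
      and near: "\<forall>u\<in>F. \<bar>q u - q0 u\<bar> < \<delta>0/2"
    have pw: "\<bar>g (q u) - g (q0 u)\<bar> \<le> \<epsilon>/4 + 2 * B * indicator Bad u" if u: "u \<in> {0..<1}" for u
    proof (cases "u \<in> Bad")
      case True
      then show ?thesis using gB[of "q u"] gB[of "q0 u"] e by (simp add: indicator_def)
    next
      case False
      then have u1: "u < 1 - \<eta>" using u unfolding Bad_def by auto
      define j where "j = nat \<lfloor>u * real m / (1 - \<eta>)\<rfloor>"
      have u0: "0 \<le> u" using u by simp
      have fl0: "0 \<le> u * real m / (1 - \<eta>)" using u0 mpos eta by simp
      have rj: "real j = of_int \<lfloor>u * real m / (1 - \<eta>)\<rfloor>" unfolding j_def using fl0 by simp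
      have jlo: "real j \<le> u * real m / (1 - \<eta>)" using rj by linarith
      have jhi: "u * real m / (1 - \<eta>) < real j + 1" using rj by linarith
      have a: "u * real m < (1 - \<eta>) * real m" using u1 mpos by (intro mult_strict_right_mono) auto
      have "u * real m / (1 - \<eta>) < real m"
        by (subst pos_divide_less_eq) (use eta1 a in \<open>auto simp: mult.commute\<close>)
      then have jm: "j < m" using jlo jhi by linarith
      have ujlo: "uu j \<le> u" unfolding uu_def using jlo mpos eta by (simp add: field_simps)
      have ujhi: "u \<le> uu (Suc j)" unfolding uu_def using jhi mpos eta by (simp add: field_simps)
      have jJ: "j \<notin> J"
      proof
        assume "j \<in> J"
        then have "u \<in> Bad" unfolding Bad_def using ujlo ujhi by auto
        then show False using False by simp
      qed
      then have oscj: "osc j < \<delta>0/2" unfolding J_def using jm by auto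
      have I1: "uu j \<in> {0..<1}" "uu (Suc j) \<in> {0..<1}" using uuI jm by auto
      have F1: "uu j \<in> F" "uu (Suc j) \<in> F" unfolding F_def using jm by auto
      have qlo: "q (uu j) \<le> q u" using mono_onD[OF qmono I1(1) u ujlo] .
      have qhi: "q u \<le> q (uu (Suc j))" using mono_onD[OF qmono u I1(2) ujhi] .
      have q0lo: "q0 (uu j) \<le> q0 u" using mono_onD[OF q0mono I1(1) u ujlo] .
      have q0hi: "q0 u \<le> q0 (uu (Suc j))" using mono_onD[OF q0mono u I1(2) ujhi] .
      have n1: "\<bar>q (uu j) - q0 (uu j)\<bar> < \<delta>0/2" "\<bar>q (uu (Suc j)) - q0 (uu (Suc j))\<bar> < \<delta>0/2"
        using near F1 by auto
      have n1a: "q0 (uu j) - \<delta>0/2 < q (uu j)" "q (uu (Suc j)) < q0 (uu (Suc j)) + \<delta>0/2"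
        using n1(1)[unfolded abs_less_iff] n1(2)[unfolded abs_less_iff] by linarith+
      have oj: "q0 (uu (Suc j)) - q0 (uu j) < \<delta>0/2" using oscj unfolding osc_def .
      have da: "q u - q0 u < \<delta>0" using qhi q0lo n1a oj by linarith
      have db: "q0 u - q u < \<delta>0" using qlo q0hi n1a oj by linarith
      have dq: "dist (q u) (q0 u) < \<delta>0" using da db by (simp add: dist_real_def abs_less_iff)
      have tu: "\<tau> u \<le> s" unfolding s_def using mono_onD[OF taumono u eI] u1 by simp
      have qu: "q u \<in> S \<and> 0 \<le> q u \<and> q u \<le> \<tau> u" using qS u by blast
      have qin: "q u \<in> S \<inter> {0..s}" using qu tu by auto
      have q0in: "q0 u \<in> S \<inter> {0..s}" using q0S[OF u] tu by auto
      have "dist (g (q u)) (g (q0 u)) < \<epsilon>/4" by (rule d0c[OF q0in qin dq])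
      then show ?thesis using False by (simp add: dist_real_def)
    qed
    have int1: "integrable UI (\<lambda>u. g (q u))"
      by (rule fm.integrable_const_bound[of _ B]) (use gB meas in auto)
    have int0: "integrable UI (\<lambda>u. g (q0 u))"
      by (rule fm.integrable_const_bound[of _ B]) (use gB meas0 in auto)
    have intB: "integrable UI (\<lambda>u. \<epsilon>/4 + 2 * B * indicator Bad u)"
      using Bad_sets by (intro Bochner_Integration.integrable_add integrable_mult_right) (auto intro!: fm.integrable_const integrable_real_indicator simp: fm.emeasure_finite top.not_eq_extremum[symmetric])
    have "\<bar>(\<integral>u. g (q u) \<partial>UI) - (\<integral>u. g (q0 u) \<partial>UI)\<bar> = \<bar>\<integral>u. g (q u) - g (q0 u) \<partial>UI\<bar>"
      using int1 int0 by simp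
    also have "\<dots> \<le> (\<integral>u. \<bar>g (q u) - g (q0 u)\<bar> \<partial>UI)" by (rule integral_abs_bound)
    also have "\<dots> \<le> (\<integral>u. \<epsilon>/4 + 2 * B * indicator Bad u \<partial>UI)"
      using int1 int0 intB pw by (intro integral_mono) (auto simp: UI_space)
    also have "\<dots> = (\<integral>u. \<epsilon>/4 \<partial>UI) + (\<integral>u. 2 * B * indicator Bad u \<partial>UI)"
      using Bad_sets
      by (intro Bochner_Integration.integral_add integrable_mult_right)
         (auto intro!: fm.integrable_const integrable_real_indicator simp: fm.emeasure_finite top.not_eq_extremum[symmetric])
    also have "\<dots> = \<epsilon>/4 * measure UI (space UI) + 2 * B * measure UI Bad"
      using Bad_sets BadI by (simp add: UI_space Int_absorb2 integral_mult_right_zero)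
    also have "measure UI (space UI) = 1" using prob_space.prob_space[OF UI_prob] .
    finally show "\<bar>(\<integral>u. g (q u) \<partial>UI) - (\<integral>u. g (q0 u) \<partial>UI)\<bar> < \<epsilon>"
      using Bad_small e by linarith
  qed
qed

definition Pset :: "(real \<Rightarrow> real) \<Rightarrow> (real \<Rightarrow> real) set" where
  "Pset \<tau> = {q \<in> PiE {0..<1} (\<lambda>u. Tset \<inter> {0..\<tau> u}). mono_on {0..<1} q}"

definition Phi :: "(real \<Rightarrow> real) \<Rightarrow> 'a::euclidean_space measure" where
  "Phi q = distr UI borel (\<lambda>u. gam (q u))"

abbreviation "Xtop \<equiv> product_topology (\<lambda>_. euclideanreal) {0..<1::real}"

lemma Pset_D:
  assumes "q \<in> Pset \<tau>" "u \<in> {0..<1}"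
  shows "q u \<in> Tset" "0 \<le> q u" "q u \<le> \<tau> u"
  using assms unfolding Pset_def by (auto simp: PiE_iff)

lemma Pset_mono: "q \<in> Pset \<tau> \<Longrightarrow> mono_on {0..<1} q"
  unfolding Pset_def by auto

lemma gamq_meas:
  assumes qm: "mono_on {0..<1} q" and qT: "\<And>u. u \<in> {0..<1} \<Longrightarrow> q u \<in> Tset"
  shows "(\<lambda>u. gam (q u) :: 'a::euclidean_space) \<in> borel_measurable UI"
proof -
  have "q \<in> borel_measurable (restrict_space borel {0..<1})"
    by (rule borel_measurable_mono_on_fnc[OF qm])
  then have q1: "q \<in> borel_measurable UI"
    by (subst measurable_cong_sets[OF sets_restrict_space_cong[OF sets_lborel] refl])
  have q2: "q \<in> measurable UI (restrict_space borel Tset)"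
    by (rule measurable_restrict_space2[OF _ q1]) (use qT in \<open>auto simp: UI_space\<close>)
  have g: "(gam :: real \<Rightarrow> 'a) \<in> borel_measurable (restrict_space borel Tset)"
    by (rule borel_measurable_continuous_on_restrict[OF gam_cont])
  show ?thesis using measurable_comp[OF q2 g] by (simp add: comp_def)
qed

lemma Pset_meas: "q \<in> Pset \<tau> \<Longrightarrow> (\<lambda>u. gam (q u) :: 'a::euclidean_space) \<in> borel_measurable UI"
  by (rule gamq_meas[OF Pset_mono]) (auto dest: Pset_D)

lemma Phi_prob: assumes "q \<in> Pset \<tau>" shows "(Phi q :: 'a::euclidean_space measure) \<in> prob_measures"
proof -
  have "prob_space (distr UI borel (\<lambda>u. gam (q u) :: 'a))"
    by (rule prob_space.prob_space_distr[OF UI_prob Pset_meas[OF assms]])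
  then show ?thesis unfolding prob_measures_def Phi_def by simp
qed

lemma Phi_int:
  assumes "q \<in> Pset \<tau>" "continuous_on UNIV (f :: 'a::euclidean_space \<Rightarrow> real)"
  shows "(\<integral>x. f x \<partial>(Phi q :: 'a measure)) = (\<integral>u. f (gam (q u)) \<partial>UI)"
  unfolding Phi_def
  by (rule integral_distr[OF Pset_meas[OF assms(1)]])
     (rule borel_measurable_continuous_onI[OF assms(2)])

lemma Pset_compact: "compactin Xtop (Pset \<tau>)"
proof (rule closed_compactin)
  let ?E = "PiE {0..<1} (\<lambda>u. Tset \<inter> {0..\<tau> u})"
  show "compactin Xtop ?E"
    by (subst compactin_PiE) (auto intro: Tset_compact)
  show "Pset \<tau> \<subseteq> ?E" unfolding Pset_def by auto
  have cE: "closedin Xtop ?E"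
    by (subst closedin_product_topology)
       (auto intro!: compact_imp_closed Tset_compact simp: closed_closedin[symmetric])
  define D where "D = {(u,v). u \<in> {0..<1::real} \<and> v \<in> {0..<1::real} \<and> u \<le> v}"
  define C where "C uv = {q \<in> topspace Xtop. q (fst uv) - q (snd uv) \<in> {..0}}" for uv :: "real \<times> real"
  have cC: "closedin Xtop (C uv)" if "uv \<in> D" for uv
    unfolding C_def
  proof (rule closedin_continuous_map_preimage)
    show "continuous_map Xtop euclideanreal (\<lambda>q. q (fst uv) - q (snd uv))"
      using that unfolding D_def
      by (intro continuous_map_diff continuous_map_product_projection) auto
    show "closedin euclideanreal {..0::real}" by (simp add: closed_closedin[symmetric])
  qed
  have De: "D \<noteq> {}" unfolding D_def by (auto intro!: exI[of _ 0])
  have cM: "closedin Xtop (\<Inter>uv\<in>D. C uv)" using De cC by blast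
  have "Pset \<tau> = ?E \<inter> (\<Inter>uv\<in>D. C uv)"
  proof (intro equalityI subsetI)
    fix q assume q: "q \<in> Pset \<tau>"
    then have "q \<in> ?E" "mono_on {0..<1} q" unfolding Pset_def by auto
    then show "q \<in> ?E \<inter> (\<Inter>uv\<in>D. C uv)"
      unfolding C_def D_def by (auto simp: mono_on_def PiE_iff)
  next
    fix q assume q: "q \<in> ?E \<inter> (\<Inter>uv\<in>D. C uv)"
    have "mono_on {0..<1} q"
    proof (rule mono_onI)
      fix u v :: real assume "u \<in> {0..<1}" "v \<in> {0..<1}" "u \<le> v"
      then have "(u,v) \<in> D" unfolding D_def by auto
      then show "q u \<le> q v" using q unfolding C_def by auto
    qed
    then show "q \<in> Pset \<tau>" using q unfolding Pset_def by auto
  qed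
  then show "closedin Xtop (Pset \<tau>)" using cE cM by auto
qed

lemma open_nbhd_finite:
  assumes "finite F" "F \<subseteq> {0..<1}"
  shows "openin Xtop {q \<in> topspace Xtop. \<forall>u\<in>F. q u \<in> ball (q0 u) \<delta>}"
  using assms
proof (induction F rule: finite_induct)
  case empty
  have "{q \<in> topspace Xtop. \<forall>u\<in>{}. q u \<in> ball (q0 u) \<delta>} = topspace Xtop" by simp
  then show ?case by (metis openin_topspace)
next
  case (insert a F)
  have e: "{q \<in> topspace Xtop. \<forall>u\<in>insert a F. q u \<in> ball (q0 u) \<delta>} =
     {q \<in> topspace Xtop. \<forall>u\<in>F. q u \<in> ball (q0 u) \<delta>} \<inter> {q \<in> topspace Xtop. q a \<in> ball (q0 a) \<delta>}"
    by auto
  have "openin Xtop {q \<in> topspace Xtop. q a \<in> ball (q0 a) \<delta>}"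
    by (rule openin_continuous_map_preimage[OF continuous_map_product_projection])
       (use insert in auto)
  then show ?case unfolding e using insert by auto
qed

lemma Phi_cont:
  assumes taumono: "mono_on {0..<1} \<tau>"
  shows "continuous_map (subtopology Xtop (Pset \<tau>)) (weak_top :: 'a::euclidean_space measure topology) Phi"
  unfolding weak_top_def
proof (rule continuous_on_generated_topo)
  have tsp: "topspace (subtopology Xtop (Pset \<tau>)) = Pset \<tau>"
    unfolding topspace_subtopology using Pset_compact[of \<tau>] by (auto simp: compactin_def)
  show "Phi ` topspace (subtopology Xtop (Pset \<tau>)) \<subseteq>
     \<Union> {{M \<in> prob_measures. (\<integral>x. f x \<partial>M) \<in> U} |(f :: 'a \<Rightarrow> real) U.
           continuous_on UNIV f \<and> bounded (range f) \<and> open U}"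
  proof
    fix M :: "'a measure" assume "M \<in> Phi ` topspace (subtopology Xtop (Pset \<tau>))"
    then have M: "M \<in> prob_measures" using Phi_prob unfolding tsp by blast
    show "M \<in> \<Union> {{M \<in> prob_measures. (\<integral>x. f x \<partial>M) \<in> U} |(f :: 'a \<Rightarrow> real) U.
           continuous_on UNIV f \<and> bounded (range f) \<and> open U}"
      using M by (intro UnionI[of "{M \<in> prob_measures. (\<integral>x. (\<lambda>_. 0::real) x \<partial>M) \<in> UNIV}"])
         (auto intro!: exI[of _ "\<lambda>_. 0::real"] exI[of _ UNIV])
  qed
  fix W assume "W \<in> {{M \<in> prob_measures. (\<integral>x. f x \<partial>M) \<in> U} |(f :: 'a \<Rightarrow> real) U.
           continuous_on UNIV f \<and> bounded (range f) \<and> open U}"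
  then obtain f U where W: "W = {M \<in> prob_measures. (\<integral>x. f x \<partial>M) \<in> U}"
    and fc: "continuous_on UNIV (f :: 'a \<Rightarrow> real)" and fb: "bounded (range f)" and Uo: "open U" by blast
  obtain B where B: "\<And>x. \<bar>f x\<bar> \<le> B" using fb unfolding bounded_iff by auto
  have pre: "Phi -` W \<inter> topspace (subtopology Xtop (Pset \<tau>)) = {q \<in> Pset \<tau>. (\<integral>u. f (gam (q u)) \<partial>UI) \<in> U}"
  proof (intro set_eqI iffI)
    fix q assume "q \<in> Phi -` W \<inter> topspace (subtopology Xtop (Pset \<tau>))"
    then have q: "q \<in> Pset \<tau>" "(\<integral>x. f x \<partial>(Phi q :: 'a measure)) \<in> U" unfolding tsp W by auto
    then show "q \<in> {q \<in> Pset \<tau>. (\<integral>u. f (gam (q u)) \<partial>UI) \<in> U}" using Phi_int[OF q(1) fc] by simp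
  next
    fix q assume "q \<in> {q \<in> Pset \<tau>. (\<integral>u. f (gam (q u)) \<partial>UI) \<in> U}"
    then have q: "q \<in> Pset \<tau>" "(\<integral>u. f (gam (q u)) \<partial>UI) \<in> U" by auto
    then show "q \<in> Phi -` W \<inter> topspace (subtopology Xtop (Pset \<tau>))"
      unfolding tsp W using Phi_int[OF q(1) fc] Phi_prob[OF q(1)] by simp
  qed
  define g where "g t = f (gam t)" for t
  have uc: "uniformly_continuous_on (Tset \<inter> {0..s}) g" for s
  proof (rule compact_uniformly_continuous[OF _ Tset_compact])
    show "continuous_on (Tset \<inter> {0..s}) g" unfolding g_def
      by (rule continuous_on_compose2[OF fc continuous_on_subset[OF gam_cont]]) auto
  qed
  have gB: "\<bar>g t\<bar> \<le> B" for t unfolding g_def by (rule B)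
  have fm: "f \<in> borel_measurable borel" by (rule borel_measurable_continuous_onI[OF fc])
  have gmeas: "(\<lambda>u. g (q u)) \<in> borel_measurable UI" if "q \<in> Pset \<tau>" for q
    unfolding g_def using measurable_comp[OF Pset_meas[OF that] fm] by (simp add: comp_def)
  show "openin (subtopology Xtop (Pset \<tau>)) (Phi -` W \<inter> topspace (subtopology Xtop (Pset \<tau>)))"
    unfolding pre
  proof (subst openin_subopen, intro ballI)
    fix q0 assume q0: "q0 \<in> {q \<in> Pset \<tau>. (\<integral>u. f (gam (q u)) \<partial>UI) \<in> U}"
    obtain \<epsilon> where e: "\<epsilon> > 0" and eU: "ball (\<integral>u. f (gam (q0 u)) \<partial>UI) \<epsilon> \<subseteq> U"
      using Uo q0 open_contains_ball by blast
    have q0P: "q0 \<in> Pset \<tau>" using q0 by simp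
    have q0S: "\<And>u. u \<in> {0..<1} \<Longrightarrow> q0 u \<in> Tset \<and> 0 \<le> q0 u \<and> q0 u \<le> \<tau> u"
      using Pset_D[OF q0P] by blast
    have ex: "\<exists>F \<delta>. finite F \<and> F \<subseteq> {0..<1} \<and> \<delta> > 0 \<and>
     (\<forall>q. mono_on {0..<1} q \<longrightarrow> (\<forall>u\<in>{0..<1}. q u \<in> Tset \<and> 0 \<le> q u \<and> q u \<le> \<tau> u)
        \<longrightarrow> (\<lambda>u. g (q u)) \<in> borel_measurable UI
        \<longrightarrow> (\<forall>u\<in>F. \<bar>q u - q0 u\<bar> < \<delta>)
        \<longrightarrow> \<bar>(\<integral>u. g (q u) \<partial>UI) - (\<integral>u. g (q0 u) \<partial>UI)\<bar> < \<epsilon>)"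
      by (rule key_step[OF uc gB taumono Pset_mono[OF q0P] q0S gmeas[OF q0P] e]) simp
    from ex obtain F \<delta> where F: "finite F" "F \<subseteq> {0..<1}" and d: "\<delta> > 0"
      and main: "\<forall>q. mono_on {0..<1} q \<longrightarrow> (\<forall>u\<in>{0..<1}. q u \<in> Tset \<and> 0 \<le> q u \<and> q u \<le> \<tau> u)
        \<longrightarrow> (\<lambda>u. g (q u)) \<in> borel_measurable UI
        \<longrightarrow> (\<forall>u\<in>F. \<bar>q u - q0 u\<bar> < \<delta>)
        \<longrightarrow> \<bar>(\<integral>u. g (q u) \<partial>UI) - (\<integral>u. g (q0 u) \<partial>UI)\<bar> < \<epsilon>"
      by (elim exE conjE)
    define T where "T = Pset \<tau> \<inter> {q \<in> topspace Xtop. \<forall>u\<in>F. q u \<in> ball (q0 u) \<delta>}"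
    have "openin (subtopology Xtop (Pset \<tau>)) T"
      unfolding T_def by (rule openin_subtopology_Int2[OF open_nbhd_finite[OF F]])
    moreover have "q0 \<in> T"
      unfolding T_def using q0P d Pset_compact[of \<tau>] by (auto simp: compactin_def)
    moreover have "T \<subseteq> {q \<in> Pset \<tau>. (\<integral>u. f (gam (q u)) \<partial>UI) \<in> U}"
    proof
      fix q assume q: "q \<in> T"
      then have qP: "q \<in> Pset \<tau>" unfolding T_def by simp
      have "\<forall>u\<in>F. \<bar>q u - q0 u\<bar> < \<delta>" using q unfolding T_def by (auto simp: dist_real_def abs_minus_commute)
      moreover have "\<forall>u\<in>{0..<1}. q u \<in> Tset \<and> 0 \<le> q u \<and> q u \<le> \<tau> u"
        using Pset_D[OF qP] by blast
      ultimately have "\<bar>(\<integral>u. g (q u) \<partial>UI) - (\<integral>u. g (q0 u) \<partial>UI)\<bar> < \<epsilon>"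
        using main Pset_mono[OF qP] gmeas[OF qP] by blast
      then have "(\<integral>u. f (gam (q u)) \<partial>UI) \<in> ball (\<integral>u. f (gam (q0 u)) \<partial>UI) \<epsilon>"
        unfolding g_def by (simp add: dist_real_def abs_minus_commute)
      then show "q \<in> {q \<in> Pset \<tau>. (\<integral>u. f (gam (q u)) \<partial>UI) \<in> U}" using eU qP by auto
    qed
    ultimately show "\<exists>T. openin (subtopology Xtop (Pset \<tau>)) T \<and> q0 \<in> T \<and>
        T \<subseteq> {q \<in> Pset \<tau>. (\<integral>u. f (gam (q u)) \<partial>UI) \<in> U}" by blast
  qed
qed

lemma K_compact:
  assumes "mono_on {0..<1} \<tau>"
  shows "compactin (weak_top :: 'a::euclidean_space measure topology) (Phi ` Pset \<tau>)"
proof (rule image_compactin[OF _ Phi_cont[OF assms]])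
  show "compactin (subtopology Xtop (Pset \<tau>)) (Pset \<tau>)"
    using Pset_compact by (simp add: compactin_subtopology)
qed

lemma emp_meas: "(x :: nat \<Rightarrow> 'a::euclidean_space) \<in> measurable (uniform_count_measure {..<N}) borel"
  by (auto simp: measurable_def sets_uniform_count_measure space_uniform_count_measure)

lemma emp_in_image:
  fixes x :: "nat \<Rightarrow> 'a::euclidean_space" and \<sigma> :: "'a \<Rightarrow> real" and \<psi> :: "real \<Rightarrow> real"
    and V :: "'a \<Rightarrow> real"
  assumes N: "0 < N"
    and \<sigma>T: "\<And>y. \<sigma> y \<in> Tset" and \<sigma>gam: "\<And>y. gam (\<sigma> y) = y" and \<sigma>\<psi>: "\<And>y. \<sigma> y \<le> \<psi> (V y)"
    and \<psi>mono: "mono \<psi>" and v0: "\<And>y. v0 \<le> V y" and M': "M - v0 \<le> M'" "0 < M'"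
    and sumV: "(\<Sum>i<N. V (x i)) \<le> real N * M"
  shows "emp_measure N x \<in> Phi ` Pset (\<lambda>u. \<psi> (v0 + M' / (1 - u)))"
proof -
  define \<tau> where "\<tau> u = \<psi> (v0 + M' / (1 - u))" for u
  define tt where "tt i = \<sigma> (x i)" for i
  define L where "L = sort_key tt [0..<N]"
  have Llen: "length L = N" unfolding L_def by simp
  have Ldist: "distinct L" unfolding L_def by simp
  have Lset: "set L = {..<N}" unfolding L_def by auto
  have Lsort: "sorted (map tt L)" unfolding L_def by simp
  have Lbij: "bij_betw ((!) L) {..<N} {..<N}"
    by (rule bij_betw_nth[OF Ldist]) (auto simp: Llen Lset)
  define kk where "kk u = nat \<lfloor>u * real N\<rfloor>" for u :: real
  have kkN: "kk u < N" if "u \<in> {0..<1}" for u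
  proof -
    have "u * real N < real N" using that N by simp
    then have a: "\<lfloor>u * real N\<rfloor> < int N" by (simp add: floor_less_iff)
    have b: "0 \<le> \<lfloor>u * real N\<rfloor>" using that by simp
    show ?thesis unfolding kk_def using a b by (simp add: nat_less_iff)
  qed
  have kk_le: "real (kk u) \<le> u * real N" if "u \<in> {0..<1}" for u
  proof -
    have "0 \<le> u * real N" using that by simp
    then show ?thesis unfolding kk_def by linarith
  qed
  have kk_mono: "kk u \<le> kk v" if "u \<le> v" for u v
    unfolding kk_def using that N by (intro nat_mono floor_mono mult_right_mono) auto
  define q where "q = restrict (\<lambda>u. tt (L ! kk u)) {0..<1}"
  have qI: "q u = tt (L ! kk u)" if "u \<in> {0..<1}" for u using that unfolding q_def by simp
  have qmono: "mono_on {0..<1} q"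
  proof (rule mono_onI)
    fix u v :: real assume u: "u \<in> {0..<1}" and v: "v \<in> {0..<1}" and uv: "u \<le> v"
    have "map tt L ! kk u \<le> map tt L ! kk v"
      by (rule sorted_nth_mono[OF Lsort kk_mono[OF uv]]) (use kkN[OF v] Llen in simp)
    then show "q u \<le> q v" using kkN[OF u] kkN[OF v] Llen by (simp add: qI[OF u] qI[OF v])
  qed
  have \<psi>le: "\<psi> a \<le> \<psi> b" if "a \<le> b" for a b using \<psi>mono that by (rule monoD)
  have sum_re: "(\<Sum>j<N. h (L ! j)) = (\<Sum>i<N. h i)" for h :: "nat \<Rightarrow> real"
    using sum.reindex_bij_betw[OF Lbij, of h] .
  have qtau: "q u \<le> \<tau> u" if u: "u \<in> {0..<1}" for u
  proof (rule ccontr)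
    assume "\<not> q u \<le> \<tau> u"
    then have gt: "\<tau> u < tt (L ! kk u)" using qI[OF u] by simp
    define w where "w = v0 + M' / (1 - u)"
    have u1: "0 < 1 - u" using u by simp
    have big: "w < V (x (L ! j))" if j: "j \<in> {kk u..<N}" for j
    proof (rule ccontr)
      assume "\<not> w < V (x (L ! j))"
      then have "\<psi> (V (x (L ! j))) \<le> \<psi> w" by (intro \<psi>le) simp
      moreover have "tt (L ! kk u) \<le> tt (L ! j)"
      proof -
        have "map tt L ! kk u \<le> map tt L ! j"
          by (rule sorted_nth_mono[OF Lsort]) (use j Llen in auto)
        then show ?thesis using j kkN[OF u] Llen by simp
      qed
      moreover have "tt (L ! j) \<le> \<psi> (V (x (L ! j)))" unfolding tt_def by (rule \<sigma>\<psi>)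
      ultimately show False using gt unfolding \<tau>_def w_def by linarith
    qed
    have ne: "{kk u..<N} \<noteq> {}" using kkN[OF u] by simp
    have "(\<Sum>j\<in>{kk u..<N}. w - v0) < (\<Sum>j\<in>{kk u..<N}. V (x (L ! j)) - v0)"
      by (rule sum_strict_mono[OF _ ne]) (use big in auto)
    also have "\<dots> \<le> (\<Sum>j<N. V (x (L ! j)) - v0)"
      by (rule sum_mono2) (auto simp: v0)
    also have "\<dots> = (\<Sum>i<N. V (x i) - v0)" by (rule sum_re)
    also have "\<dots> = (\<Sum>i<N. V (x i)) - real N * v0" by (simp add: sum_subtractf)
    also have "\<dots> \<le> real N * M'" using sumV M' N
      by (smt (verit, ccfv_SIG) mult_left_mono of_nat_0_le_iff right_diff_distrib)
    finally have "real (N - kk u) * (M' / (1 - u)) < real N * M'"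
      unfolding w_def by simp
    then have "real (N - kk u) * M' < real N * M' * (1 - u)"
      using u1 by (simp add: field_simps)
    then have "real (N - kk u) < real N * (1 - u)"
      using M' by (simp add: mult.commute mult.left_commute)
    then have "real N * u < real (kk u)" using kkN[OF u] by (simp add: of_nat_diff algebra_simps)
    then show False using kk_le[OF u] by (simp add: mult.commute)
  qed
  have qP: "q \<in> Pset \<tau>"
    unfolding Pset_def
  proof (intro CollectI conjI PiE_I)
    show "mono_on {0..<1} q" by (rule qmono)
    fix u :: real assume u: "u \<in> {0..<1}"
    show "q u \<in> Tset \<inter> {0..\<tau> u}"
      using qI[OF u] \<sigma>T Tset_nonneg qtau[OF u] unfolding tt_def by auto
  next
    fix u :: real assume "u \<notin> {0..<1}"
    then show "q u = undefined" unfolding q_def by auto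
  qed
  have gq: "gam (q u) = x (L ! kk u)" if "u \<in> {0..<1}" for u
    using qI[OF that] \<sigma>gam unfolding tt_def by simp
  have "Phi q = emp_measure N x"
  proof (rule measure_eqI)
    show "sets (Phi q) = sets (emp_measure N x)" unfolding Phi_def emp_measure_def by simp
    fix A :: "'a set" assume "A \<in> sets (Phi q)"
    then have A: "A \<in> sets borel" unfolding Phi_def by simp
    define Ks where "Ks = {k \<in> {..<N}. x (L ! k) \<in> A}"
    define Ico where "Ico k = {real k / real N ..< real (Suc k) / real N}" for k
    have inIco: "u \<in> Ico k \<longleftrightarrow> real k \<le> u * real N \<and> u * real N < real k + 1" for u k
      unfolding Ico_def using N by (auto simp: field_simps)
    have Ico_kk: "kk u = k" if "u \<in> Ico k" for u k
    proof -
      have "\<lfloor>u * real N\<rfloor> = int k" using that unfolding inIco by (simp add: floor_eq_iff)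
      then show ?thesis unfolding kk_def by simp
    qed
    have IcoI: "Ico k \<subseteq> {0..<1}" if "k < N" for k
    proof
      fix u assume "u \<in> Ico k"
      then have "real k \<le> u * real N" "u * real N < real k + 1" unfolding inIco by auto
      moreover have "real k + 1 \<le> real N" using that by simp
      ultimately have "0 \<le> u * real N" "u * real N < real N" by linarith+
      then show "u \<in> {0..<1}" using N by (simp add: zero_le_mult_iff)
    qed
    have E: "(\<lambda>u. gam (q u)) -` A \<inter> space UI = (\<Union>k\<in>Ks. Ico k)"
    proof (intro equalityI subsetI)
      fix u assume "u \<in> (\<lambda>u. gam (q u)) -` A \<inter> space UI"
      then have u: "u \<in> {0..<1}" "gam (q u) \<in> A" by (auto simp: UI_space)
      have "kk u \<in> Ks" unfolding Ks_def using u gq[OF u(1)] kkN[OF u(1)] by auto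
      moreover have "u \<in> Ico (kk u)" unfolding inIco using kk_le[OF u(1)] u(1) unfolding kk_def
        by (simp add: mult.commute)
      ultimately show "u \<in> (\<Union>k\<in>Ks. Ico k)" by blast
    next
      fix u assume "u \<in> (\<Union>k\<in>Ks. Ico k)"
      then obtain k where k: "k \<in> Ks" "u \<in> Ico k" by blast
      have kN: "k < N" using k(1) unfolding Ks_def by simp
      have u: "u \<in> {0..<1}" using IcoI[OF kN] k(2) by blast
      have "kk u = k" by (rule Ico_kk[OF k(2)])
      then show "u \<in> (\<lambda>u. gam (q u)) -` A \<inter> space UI"
        using k u gq[OF u] unfolding Ks_def by (auto simp: UI_space)
    qed
    have IcoS: "Ico ` Ks \<subseteq> sets UI"
    proof (rule image_subsetI)
      fix k assume "k \<in> Ks"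
      then have kN: "k < N" by (simp add: Ks_def)
      show "Ico k \<in> sets UI" by (rule UI_sets[OF IcoI[OF kN]]) (simp add: Ico_def)
    qed
    have disj: "disjoint_family_on Ico Ks"
      unfolding disjoint_family_on_def using Ico_kk by blast
    have mIco: "emeasure UI (Ico k) = ennreal (1 / real N)" if "k \<in> Ks" for k
    proof -
      have "emeasure UI (Ico k) = emeasure lborel (Ico k)"
        by (rule emeasure_restrict_space) (use IcoI that in \<open>auto simp: Ks_def\<close>)
      also have "\<dots> = ennreal (real (Suc k) / real N - real k / real N)"
        unfolding Ico_def using N by (subst emeasure_lborel_Ico) (auto simp: divide_right_mono)
      also have "real (Suc k) / real N - real k / real N = 1 / real N" by (simp add: diff_divide_distrib[symmetric])
      finally show ?thesis .
    qed
    have "emeasure (Phi q) A = emeasure UI ((\<lambda>u. gam (q u)) -` A \<inter> space UI)"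
      unfolding Phi_def by (rule emeasure_distr[OF Pset_meas[OF qP] A])
    also have "\<dots> = (\<Sum>k\<in>Ks. emeasure UI (Ico k))"
      unfolding E by (rule sum_emeasure[OF IcoS disj, symmetric]) (simp add: Ks_def)
    also have "\<dots> = of_nat (card Ks) * ennreal (1 / real N)" using mIco by simp
    finally have eq1: "emeasure (Phi q) A = of_nat (card Ks) * ennreal (1 / real N)" .
    have cK: "card Ks = card {i \<in> {..<N}. x i \<in> A}"
    proof -
      have inj: "inj_on ((!) L) Ks"
        using bij_betw_imp_inj_on[OF Lbij] unfolding Ks_def by (rule inj_on_subset) auto
      have "(!) L ` Ks = {i \<in> {..<N}. x i \<in> A}"
      proof (intro equalityI subsetI)
        fix i assume "i \<in> (!) L ` Ks"
        then obtain k where "k \<in> Ks" "i = L ! k" by blast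
        then show "i \<in> {i \<in> {..<N}. x i \<in> A}"
          using Lset Llen nth_mem[of k L] unfolding Ks_def by auto
      next
        fix i assume i: "i \<in> {i \<in> {..<N}. x i \<in> A}"
        then have "i \<in> set L" using Lset by auto
        then obtain k where "k < length L" "L ! k = i" by (auto simp: in_set_conv_nth)
        then show "i \<in> (!) L ` Ks" using i Llen unfolding Ks_def by auto
      qed
      then show ?thesis using card_image[OF inj] by simp
    qed
    have "emeasure (emp_measure N x) A = emeasure (uniform_count_measure {..<N}) (x -` A \<inter> {..<N})"
      unfolding emp_measure_def by (subst emeasure_distr[OF emp_meas A]) (simp add: space_uniform_count_measure)
    also have "x -` A \<inter> {..<N} = {i \<in> {..<N}. x i \<in> A}" by auto
    also have "emeasure (uniform_count_measure {..<N}) {i \<in> {..<N}. x i \<in> A}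
        = ennreal (real (card {i \<in> {..<N}. x i \<in> A}) / real N)"
      using N by (subst emeasure_uniform_count_measure)
        (auto simp: ennreal_of_nat_eq_real_of_nat divide_ennreal)
    finally have eq2: "emeasure (emp_measure N x) A = ennreal (real (card {i \<in> {..<N}. x i \<in> A}) / real N)" .
    show "emeasure (Phi q) A = emeasure (emp_measure N x) A"
      unfolding eq1 eq2 cK using N by (simp add: ennreal_of_nat_eq_real_of_nat ennreal_mult''[symmetric])
  qed
  then have "emp_measure N x = Phi q" by simp
  from image_eqI[where f=Phi and x=q, OF this qP] show ?thesis unfolding \<tau>_def .
qed

lemma pairs_Suc: "{(i,j). i<j \<and> j < Suc N} = {(i,j). i<j \<and> j < N} \<union> (\<lambda>i. (i,N)) ` {..<N}"
  by auto

lemma pairs_finite: "finite {(i,j). i<j \<and> j < (N::nat)}"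
  by (rule finite_subset[of _ "{..<N} \<times> {..<N}"]) auto

lemma pairs_sum:
  fixes f :: "nat \<Rightarrow> real"
  shows "(\<Sum>(i,j)\<in>{(i,j). i<j \<and> j < N}. f i + f j) = real (N - 1) * (\<Sum>i<N. f i)"
proof (induction N)
  case 0 then show ?case by simp
next
  case (Suc N)
  have d: "{(i,j). i<j \<and> j < N} \<inter> (\<lambda>i. (i,N)) ` {..<N} = {}" by auto
  have "(\<Sum>(i,j)\<in>{(i,j). i<j \<and> j < Suc N}. f i + f j)
      = (\<Sum>(i,j)\<in>{(i,j). i<j \<and> j < N}. f i + f j) + (\<Sum>(i,j)\<in>(\<lambda>i. (i,N)) ` {..<N}. f i + f j)"
    unfolding pairs_Suc by (rule sum.union_disjoint[OF pairs_finite _ d]) simp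
  also have "(\<Sum>(i,j)\<in>(\<lambda>i. (i,N)) ` {..<N}. f i + f j) = (\<Sum>i<N. f i + f N)"
    by (subst sum.reindex) (auto simp: inj_on_def)
  also have "\<dots> = (\<Sum>i<N. f i) + real N * f N" by (simp add: sum.distrib)
  finally show ?case using Suc.IH by (cases N) (auto simp: algebra_simps)
qed

lemma pairs_card: "2 * card {(i,j). i<j \<and> j < N} = N * (N - 1)"
proof (induction N)
  case 0 then show ?case by simp
next
  case (Suc N)
  have d: "{(i,j). i<j \<and> j < N} \<inter> (\<lambda>i. (i,N)) ` {..<N} = {}" by auto
  have "card {(i,j). i<j \<and> j < Suc N} = card {(i,j). i<j \<and> j < N} + card ((\<lambda>i. (i,N)) ` {..<N})"
    unfolding pairs_Suc by (rule card_Un_disjoint[OF pairs_finite _ d]) simp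
  also have "card ((\<lambda>i. (i,N)) ` {..<N}) = N" by (subst card_image) (auto simp: inj_on_def)
  finally show ?case using Suc.IH by (cases N) (auto simp: algebra_simps)
qed

lemma H_lower:
  fixes V :: "'a \<Rightarrow> real" and W :: "'a \<Rightarrow> 'a \<Rightarrow> ereal"
  assumes N: "0 < N" and Wb: "\<And>x y. W x y \<ge> ereal (c - e * (V x + V y))"
  shows "H_N V W N x \<ge> ereal ((\<Sum>i<N. V (x i)) / real N - \<bar>c\<bar>/2
            - e * real (N - 1) * (\<Sum>i<N. V (x i)) / (real N)^2)"
proof -
  define S where "S = (\<Sum>i<N. V (x i))"
  define P where "P = {(i,j). i<j \<and> j < N}"
  have "(\<Sum>(i,j)\<in>P. W (x i) (x j)) \<ge> (\<Sum>(i,j)\<in>P. ereal (c - e * (V (x i) + V (x j))))"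
    by (rule sum_mono) (auto intro: Wb)
  also have "(\<Sum>(i,j)\<in>P. ereal (c - e * (V (x i) + V (x j)))) = ereal (\<Sum>(i,j)\<in>P. c - e * (V (x i) + V (x j)))"
    by (simp add: case_prod_unfold sum_ereal)
  also have "(\<Sum>(i,j)\<in>P. c - e * (V (x i) + V (x j))) = c * real (card P) - e * (real (N - 1) * S)"
  proof -
    have "(\<Sum>(i,j)\<in>P. c - e * (V (x i) + V (x j))) = (\<Sum>p\<in>P. c) - e * (\<Sum>(i,j)\<in>P. V (x i) + V (x j))"
      by (simp add: sum_subtractf sum_distrib_left case_prod_unfold)
    also have "(\<Sum>(i,j)\<in>P. V (x i) + V (x j)) = real (N - 1) * S"
      unfolding P_def S_def by (rule pairs_sum)
    finally show ?thesis by simp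
  qed
  finally have s1: "ereal (c * real (card P) - e * (real (N - 1) * S)) \<le> (\<Sum>(i,j)\<in>P. W (x i) (x j))" .
  have cP: "2 * real (card P) = real N * real (N - 1)"
  proof -
    have "real (2 * card P) = real (N * (N - 1))" unfolding P_def by (simp only: pairs_card)
    then show ?thesis by simp
  qed
  have cP2: "real (card P) \<le> (real N)^2 / 2"
  proof -
    have "real N * real (N - 1) \<le> real N * real N" using N by (intro mult_left_mono) auto
    then show ?thesis using cP by (simp add: power2_eq_square)
  qed
  have cc: "- \<bar>c\<bar> * (real N)^2 / 2 \<le> c * real (card P)"
  proof -
    have "- \<bar>c\<bar> * ((real N)^2 / 2) \<le> - \<bar>c\<bar> * real (card P)" using cP2 by (intro mult_left_mono_neg) auto
    also have "\<dots> \<le> c * real (card P)" by (intro mult_right_mono) auto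
    finally show ?thesis by simp
  qed
  have Np: "0 < (real N)^2" using N by simp
  have m1: "ereal (1 / (real N)^2) * ereal (c * real (card P) - e * (real (N - 1) * S))
      \<le> ereal (1 / (real N)^2) * (\<Sum>(i,j)\<in>P. W (x i) (x j))"
    by (rule ereal_mult_left_mono[OF s1]) simp
  have m2: "(c * real (card P) - e * (real (N - 1) * S)) / (real N)^2
       \<ge> - \<bar>c\<bar>/2 - e * real (N - 1) * S / (real N)^2"
  proof -
    have "(c * real (card P) - e * (real (N - 1) * S)) / (real N)^2
        = c * real (card P) / (real N)^2 - e * real (N - 1) * S / (real N)^2"
      by (simp add: diff_divide_distrib mult.assoc)
    moreover have "c * real (card P) / (real N)^2 \<ge> - \<bar>c\<bar>/2"
      using cc Np by (simp add: field_simps)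
    ultimately show ?thesis by linarith
  qed
  have "ereal (- \<bar>c\<bar>/2 - e * real (N - 1) * S / (real N)^2)
      \<le> ereal ((c * real (card P) - e * (real (N - 1) * S)) / (real N)^2)"
    using m2 by (simp only: ereal_less_eq)
  also have "\<dots> = ereal (1 / (real N)^2) * ereal (c * real (card P) - e * (real (N - 1) * S))"
    by simp
  also have "\<dots> \<le> ereal (1 / (real N)^2) * (\<Sum>(i,j)\<in>P. W (x i) (x j))" by (rule m1)
  finally have s2: "ereal (- \<bar>c\<bar>/2 - e * real (N - 1) * S / (real N)^2)
      \<le> ereal (1 / (real N)^2) * (\<Sum>(i,j)\<in>P. W (x i) (x j))" .
  have "ereal (S / real N - \<bar>c\<bar>/2 - e * real (N - 1) * S / (real N)^2)
      = ereal (S / real N) + ereal (- \<bar>c\<bar>/2 - e * real (N - 1) * S / (real N)^2)" by simp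
  also have "\<dots> \<le> ereal (S / real N) + ereal (1 / (real N)^2) * (\<Sum>(i,j)\<in>P. W (x i) (x j))"
    by (rule add_left_mono[OF s2])
  also have "\<dots> = H_N V W N x" unfolding H_N_def S_def P_def by simp
  finally show ?thesis unfolding S_def .
qed

lemma gibbs_bound:
  assumes b: "0 < b" and h: "ereal r \<le> h"
  shows "gibbs_weight b h \<le> ennreal (exp (- b * r))"
proof (cases "h = \<infinity>")
  case True then show ?thesis by (simp add: gibbs_weight_def)
next
  case False
  with h obtain s where hs: "h = ereal s" by (cases h) auto
  then have "r \<le> s" using h by simp
  then have "exp (- b * s) \<le> exp (- b * r)" using b by simp
  then show ?thesis unfolding gibbs_weight_def hs by (simp add: ennreal_leI)
qed

lemma ln_ennreal_bound:
  assumes "Z \<le> ennreal y" "0 < y"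
  shows "ln_ennreal Z \<le> ereal (ln y)"
proof -
  consider "Z = 0" | "Z \<noteq> 0" by blast
  then show ?thesis
  proof cases
    case 1 then show ?thesis by (simp add: ln_ennreal_def)
  next
    case 2
    have nt: "Z \<noteq> \<top>" using assms(1) by (auto simp: top_unique)
    have pos: "0 < enn2real Z" using 2 nt by (simp add: enn2real_positive_iff less_top[symmetric] zero_less_iff_neq_zero)
    have "enn2real Z \<le> enn2real (ennreal y)" by (rule enn2real_mono[OF assms(1)]) simp
    then have "enn2real Z \<le> y" using assms(2) by simp
    then have "ln (enn2real Z) \<le> ln y" using pos by simp
    then show ?thesis using 2 nt by (simp add: ln_ennreal_def)
  qed
qed

lemma V_evt:
  fixes V :: "'a::euclidean_space \<Rightarrow> real"
  assumes "filterlim V at_top at_infinity"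
  shows "\<exists>b. \<forall>x. b \<le> norm x \<longrightarrow> v \<le> V x"
proof -
  have "eventually (\<lambda>x. v \<le> V x) at_infinity" using assms unfolding filterlim_at_top by blast
  then show ?thesis unfolding eventually_at_infinity .
qed

lemma V_lower:
  fixes V :: "'a::euclidean_space \<Rightarrow> real"
  assumes Vc: "continuous_on UNIV V" and Vco: "filterlim V at_top at_infinity"
  shows "\<exists>v0. \<forall>y. v0 \<le> V y"
proof -
  obtain b where b: "\<And>x. b \<le> norm x \<Longrightarrow> V 0 \<le> V x" using V_evt[OF Vco, of "V 0"] by blast
  have "compact (V ` cball 0 \<bar>b\<bar>)"
    by (rule compact_continuous_image[OF continuous_on_subset[OF Vc] compact_cball]) simp
  then have "bounded (V ` cball 0 \<bar>b\<bar>)" by (rule compact_imp_bounded)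
  then obtain a where a0: "\<forall>z\<in>V ` cball 0 \<bar>b\<bar>. norm z \<le> a" unfolding bounded_iff by blast
  have a: "\<bar>V y\<bar> \<le> a" if "y \<in> cball 0 \<bar>b\<bar>" for y using a0 that by auto
  have "min (V 0) (-a) \<le> V y" for y
  proof (cases "b \<le> norm y")
    case True then show ?thesis using b[of y] by simp
  next
    case False
    then have "y \<in> cball 0 \<bar>b\<bar>" by auto
    then show ?thesis using a[of y] by linarith
  qed
  then show ?thesis by blast
qed

lemma compact_set_exists:
  fixes V :: "'a::euclidean_space \<Rightarrow> real" and M :: real
  assumes Vc: "continuous_on UNIV V" and Vco: "filterlim V at_top at_infinity"
  shows "\<exists>K. K \<subseteq> prob_measures \<and> compactin weak_top K \<and>
     (\<forall>N x. 0 < N \<longrightarrow> (\<Sum>i<N. V (x i)) \<le> real N * M \<longrightarrow> emp_measure N x \<in> K)"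
proof -
  obtain v0 where v0: "\<And>y. v0 \<le> V y" using V_lower[OF Vc Vco] by blast
  have bdd: "\<exists>R. \<forall>x. V x \<le> v \<longrightarrow> norm x \<le> R" for v
  proof -
    obtain b where b: "\<And>x. b \<le> norm x \<Longrightarrow> v + 1 \<le> V x" using V_evt[OF Vco, of "v+1"] by blast
    have "V x \<le> v \<longrightarrow> norm x \<le> b" for x using b[of x] by force
    then show ?thesis by blast
  qed
  define Bs where "Bs v = insert 0 (norm ` {x. V x \<le> v})" for v
  define Bf where "Bf v = Sup (Bs v)" for v
  have bddA: "bdd_above (Bs v)" for v
  proof -
    obtain R where R: "\<And>x. V x \<le> v \<Longrightarrow> norm x \<le> R" using bdd[of v] by blast
    show ?thesis unfolding Bs_def by (rule bdd_aboveI[of _ "max R 0"]) (auto dest: R)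
  qed
  have Bf_up: "norm y \<le> Bf (V y)" for y
    unfolding Bf_def by (rule cSup_upper[OF _ bddA]) (auto simp: Bs_def)
  have Bf_mono: "mono Bf"
  proof (rule monoI)
    fix v v' :: real assume "v \<le> v'"
    then have sub: "Bs v \<subseteq> Bs v'" unfolding Bs_def by auto
    show "Bf v \<le> Bf v'" unfolding Bf_def by (rule cSup_subset_mono[OF _ bddA sub]) (simp add: Bs_def)
  qed
  define \<sigma> where "\<sigma> y = (SOME t. t \<in> Tset \<and> gam t = y \<and> t \<le> norm y + 2)" for y :: 'a
  have \<sigma>: "\<sigma> y \<in> Tset \<and> gam (\<sigma> y) = y \<and> \<sigma> y \<le> norm y + 2" for y
  proof -
    have "\<exists>t. t \<in> Tset \<and> gam t = y \<and> t \<le> norm y + 2" using gam_surj[of y] by blast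
    then show ?thesis unfolding \<sigma>_def by (rule someI_ex)
  qed
  define \<psi> where "\<psi> v = Bf v + 2" for v
  have \<psi>mono: "mono \<psi>" unfolding \<psi>_def using Bf_mono by (auto simp: mono_def)
  have \<sigma>\<psi>: "\<sigma> y \<le> \<psi> (V y)" for y using \<sigma>[of y] Bf_up[of y] unfolding \<psi>_def by linarith
  define M' where "M' = \<bar>M - v0\<bar> + 1"
  have M': "M - v0 \<le> M'" "0 < M'" unfolding M'_def by auto
  define \<tau> where "\<tau> u = \<psi> (v0 + M' / (1 - u))" for u
  have taumono: "mono_on {0..<1} \<tau>"
  proof (rule mono_onI)
    fix u v :: real assume u: "u \<in> {0..<1}" and v: "v \<in> {0..<1}" and uv: "u \<le> v"
    have "M' / (1 - u) \<le> M' / (1 - v)"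
      using u v uv M' by (intro divide_left_mono) auto
    then show "\<tau> u \<le> \<tau> v" unfolding \<tau>_def using \<psi>mono by (auto intro: monoD)
  qed
  define K where "K = (Phi ` Pset \<tau> :: 'a measure set)"
  have "K \<subseteq> prob_measures" unfolding K_def using Phi_prob by blast
  moreover have "compactin weak_top K" unfolding K_def by (rule K_compact[OF taumono])
  moreover have "\<forall>N x. 0 < N \<longrightarrow> (\<Sum>i<N. V (x i)) \<le> real N * M \<longrightarrow> emp_measure N x \<in> K"
  proof (intro allI impI)
    fix N :: nat and x :: "nat \<Rightarrow> 'a"
    assume N: "0 < N" and s: "(\<Sum>i<N. V (x i)) \<le> real N * M"
    show "emp_measure N x \<in> K" unfolding K_def \<tau>_def
      by (rule emp_in_image[OF N _ _ \<sigma>\<psi> \<psi>mono v0 M' s]) (use \<sigma> in auto)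
  qed
  ultimately show ?thesis by blast
qed

lemma ereal_div_bound:
  assumes "X \<le> ereal y" "0 < b"
  shows "X / ereal b \<le> ereal (y / b)"
proof (cases X)
  case (real r)
  then show ?thesis using assms by (simp add: divide_right_mono)
next
  case PInf then show ?thesis using assms by simp
next
  case MInf then show ?thesis using assms by simp
qed

lemma energy_ineq:
  fixes t S N M a e c :: real
  assumes t: "0 \<le> t" and ta: "1 \<le> t * a" and S: "N * M < S" and M: "0 < M" and N: "1 \<le> N"
    and e: "0 < e" and a: "a = 1 - e"
  shows "- (t * N) * (S / N - \<bar>c\<bar>/2 - e * (N - 1) * S / N^2) \<le> t * N * \<bar>c\<bar>/2 - (t * a - 1) * N * M - S"
proof -
  have Spos: "0 < S" using S M N by (smt (verit) mult_pos_pos)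
  have "e * (N - 1) * S / N^2 \<le> e * S / N"
  proof -
    have "e * (N - 1) * S / N^2 = (e * S / N) * ((N - 1) / N)" using N by (simp add: field_simps power2_eq_square)
    also have "\<dots> \<le> (e * S / N) * 1" using N e Spos by (intro mult_left_mono) auto
    finally show ?thesis by simp
  qed
  then have "- (t * N) * (S / N - \<bar>c\<bar>/2 - e * (N - 1) * S / N^2) \<le> - (t * N) * (S / N - \<bar>c\<bar>/2 - e * S / N)"
    using t N by (intro mult_left_mono_neg) auto
  also have "\<dots> = t * N * \<bar>c\<bar>/2 - t * a * S" using N unfolding a by (simp add: field_simps)
  also have "t * a * S = (t * a - 1) * S + S" by (simp add: algebra_simps)
  also have "(t * a - 1) * (N * M) \<le> (t * a - 1) * S" using ta S by (intro mult_left_mono) auto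
  then have "t * N * \<bar>c\<bar>/2 - ((t * a - 1) * S + S) \<le> t * N * \<bar>c\<bar>/2 - (t * a - 1) * N * M - S"
    by (simp add: mult.assoc)
  finally show ?thesis .
qed

lemma ZQ_bound:
  fixes V :: "'a::euclidean_space \<Rightarrow> real" and W :: "'a \<Rightarrow> 'a \<Rightarrow> ereal" and beta :: "nat \<Rightarrow> real"
  assumes N: "0 < N" and t: "t = beta N / real N" and bp: "0 < beta N" and ta: "1 \<le> t * a"
    and M: "0 < M" and e: "0 < e" and a: "a = 1 - e"
    and Wb: "\<And>x y. W x y \<ge> ereal (c - e * (V x + V y))"
    and emp: "\<And>x. (\<Sum>i<N. V (x i)) \<le> real N * M \<Longrightarrow> emp_measure N x \<in> K"
    and Vc: "continuous_on UNIV V" and Vint: "integrable lborel (\<lambda>x. exp (- V x))"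
  shows "ZQ V W beta N (prob_measures - K) \<le>
     ennreal (exp (t * real N * \<bar>c\<bar>/2 - (t * a - 1) * real N * M) * (\<integral>x. exp (- V x) \<partial>lborel) ^ N)"
proof -
  define E0 where "E0 = exp (t * real N * \<bar>c\<bar>/2 - (t * a - 1) * real N * M)"
  define Ir where "Ir = (\<integral>x. exp (- V x) \<partial>lborel)"
  have Vm: "V \<in> borel_measurable borel" by (rule borel_measurable_continuous_onI[OF Vc])
  have bt: "beta N = t * real N" using N unfolding t by simp
  have t0: "0 \<le> t" unfolding t using bp by simp
  have pw: "indicator {x. emp_measure N x \<in> prob_measures - K} x * gibbs_weight (beta N) (H_N V W N x)
      \<le> ennreal E0 * (\<Prod>i<N. ennreal (exp (- V (x i))))" for x
  proof (cases "emp_measure N x \<in> prob_measures - K")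
    case False then show ?thesis by simp
  next
    case True
    then have "emp_measure N x \<notin> K" by simp
    then have S: "real N * M < (\<Sum>i<N. V (x i))" using emp by force
    define S where "S = (\<Sum>i<N. V (x i))"
    define hl where "hl = S / real N - \<bar>c\<bar>/2 - e * real (N - 1) * S / (real N)^2"
    have H: "ereal hl \<le> H_N V W N x" unfolding hl_def S_def by (rule H_lower[OF N Wb])
    have g: "gibbs_weight (beta N) (H_N V W N x) \<le> ennreal (exp (- beta N * hl))"
      by (rule gibbs_bound[OF bp H])
    have N1: "1 \<le> real N" using N by simp
    have "- (t * real N) * (S / real N - \<bar>c\<bar>/2 - e * (real N - 1) * S / (real N)^2)
        \<le> t * real N * \<bar>c\<bar>/2 - (t * a - 1) * real N * M - S"
      by (rule energy_ineq[OF t0 ta _ M N1 e a]) (use S in \<open>simp add: S_def\<close>)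
    moreover have "real (N - 1) = real N - 1" using N by simp
    ultimately have "- beta N * hl \<le> t * real N * \<bar>c\<bar>/2 - (t * a - 1) * real N * M - S"
      unfolding hl_def bt by simp
    then have "exp (- beta N * hl) \<le> exp (t * real N * \<bar>c\<bar>/2 - (t * a - 1) * real N * M - S)" by simp
    also have "\<dots> = E0 * exp (- S)"
      unfolding E0_def by (metis diff_conv_add_uminus exp_add)
    also have "exp (- S) = (\<Prod>i<N. exp (- V (x i)))"
    proof -
      have "(\<Prod>i<N. exp (- V (x i))) = exp (\<Sum>i<N. - V (x i))" by (rule exp_sum[symmetric]) simp
      also have "(\<Sum>i<N. - V (x i)) = - S" unfolding S_def by (rule sum_negf)
      finally show ?thesis by simp
    qed
    finally have "ennreal (exp (- beta N * hl)) \<le> ennreal (E0 * (\<Prod>i<N. exp (- V (x i))))"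
      by (rule ennreal_leI)
    also have "\<dots> = ennreal E0 * (\<Prod>i<N. ennreal (exp (- V (x i))))"
      by (simp add: prod_ennreal ennreal_mult' E0_def)
    finally show ?thesis using g True by simp
  qed
  interpret product_sigma_finite "\<lambda>_. lborel :: 'a measure" by standard
  have pm: "(\<lambda>x. \<Prod>i<N. ennreal (exp (- V (x i)))) \<in> borel_measurable (config_space N :: (nat \<Rightarrow> 'a) measure)"
    unfolding config_space_def using Vm by measurable
  have "ZQ V W beta N (prob_measures - K)
      \<le> (\<integral>\<^sup>+ x. ennreal E0 * (\<Prod>i<N. ennreal (exp (- V (x i)))) \<partial>config_space N)"
    unfolding ZQ_def by (rule nn_integral_mono) (rule pw)
  also have "\<dots> = ennreal E0 * (\<integral>\<^sup>+ x. (\<Prod>i<N. ennreal (exp (- V (x i)))) \<partial>config_space N)"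
    by (rule nn_integral_cmult[OF pm])
  also have "(\<integral>\<^sup>+ x. (\<Prod>i<N. ennreal (exp (- V (x i)))) \<partial>config_space N)
      = (\<Prod>i<N. \<integral>\<^sup>+ y. ennreal (exp (- V y)) \<partial>lborel)"
    unfolding config_space_def
    by (rule product_nn_integral_prod[where f="\<lambda>_ y. ennreal (exp (- V y))"]) (use Vm in auto)
  also have "(\<integral>\<^sup>+ y. ennreal (exp (- V y)) \<partial>lborel) = ennreal Ir"
    unfolding Ir_def by (rule nn_integral_eq_integral[OF Vint]) simp
  also have "ennreal E0 * (\<Prod>i<N. ennreal Ir) = ennreal (E0 * Ir ^ N)"
  proof -
    have "0 \<le> Ir" unfolding Ir_def by (rule integral_nonneg_AE) simp
    then show ?thesis by (simp add: ennreal_power ennreal_mult' E0_def)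
  qed
  finally show ?thesis unfolding E0_def Ir_def .
qed

theorem lemma2p3:
  fixes V :: "'a::euclidean_space \<Rightarrow> real"
    and W :: "'a \<Rightarrow> 'a \<Rightarrow> ereal"
    and beta :: "nat \<Rightarrow> real"
  assumes W_sym: "\<And>x y. W x y = W y x"
    and W_not_minf: "\<And>x y. W x y \<noteq> -\<infinity>"
    and W_fin_off_diag: "\<And>x y. x \<noteq> y \<Longrightarrow> W x y \<noteq> \<infinity>"
    and W_meas: "(\<lambda>(x, y). W x y) \<in> borel_measurable (borel \<Otimes>\<^sub>M borel)"
    and V_cont: "continuous_on UNIV V"
    and V_coercive: "filterlim V at_top at_infinity"
    and V_int: "integrable lborel (\<lambda>x. exp (- V x))"
    and H3: "\<exists>c \<epsilon>o. 0 < \<epsilon>o \<and> \<epsilon>o < 1 \<and>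
               (\<forall>x y. W x y \<ge> ereal (c - \<epsilon>o * (V x + V y)))"
    and beta_pos: "\<And>N. beta N > 0"
    and beta_growth: "filterlim (\<lambda>N. beta N / real N) at_top sequentially"
  shows "\<forall>L\<ge>0. \<exists>K. K \<subseteq> prob_measures \<and> compactin weak_top K \<and>
           Limsup sequentially
             (\<lambda>N. ln_ennreal (ZQ V W beta N (prob_measures - K)) / ereal (beta N))
           \<le> ereal (- L)"
proof (intro allI impI)
  fix L :: real assume L: "0 \<le> L"
  from H3 obtain c e where e: "0 < e" "e < 1" and Wb: "\<And>x y. W x y \<ge> ereal (c - e * (V x + V y))"
    by blast
  define a where "a = 1 - e"
  have a: "0 < a" unfolding a_def using e by simp
  define Ir where "Ir = (\<integral>x. exp (- V x) \<partial>lborel)"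
  have Ir0: "0 \<le> Ir" unfolding Ir_def by (rule integral_nonneg_AE) simp
  define C where "C = Ir + 1"
  have C1: "1 \<le> C" unfolding C_def using Ir0 by simp
  have lnC: "0 \<le> ln C" using C1 by simp
  define M where "M = (\<bar>c\<bar>/2 + L + 1) / a"
  have M0: "0 < M" unfolding M_def using a L by (intro divide_pos_pos) auto
  have aM: "a * M = \<bar>c\<bar>/2 + L + 1" unfolding M_def using a by simp
  obtain K where K: "K \<subseteq> prob_measures" "compactin weak_top K"
    and emp: "\<forall>N x. 0 < N \<longrightarrow> (\<Sum>i<N. V (x i)) \<le> real N * M \<longrightarrow> emp_measure N x \<in> K"
    using compact_set_exists[OF V_cont V_coercive, of M] by blast
  define Z0 where "Z0 = max (1/a) (M + ln C + 1)"
  have ev1: "eventually (\<lambda>N. Z0 \<le> beta N / real N) sequentially"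
    using beta_growth unfolding filterlim_at_top by blast
  have ev2: "eventually (\<lambda>N. 1 \<le> N) sequentially" by (rule eventually_ge_at_top)
  have ev: "eventually (\<lambda>N. ln_ennreal (ZQ V W beta N (prob_measures - K)) / ereal (beta N) \<le> ereal (- L)) sequentially"
    using ev1 ev2
  proof eventually_elim
    case (elim N)
    have N: "0 < N" using elim by simp
    define t where "t = beta N / real N"
    have tZ: "Z0 \<le> t" using elim unfolding t_def by simp
    have t1: "1/a \<le> t" "M + ln C + 1 \<le> t" using tZ unfolding Z0_def by auto
    have ta: "1 \<le> t * a" using t1(1) a by (simp add: field_simps)
    have tpos: "0 < t" using t1(2) M0 lnC by linarith
    have bt: "beta N = t * real N" unfolding t_def using N by simp
    define E0 where "E0 = exp (t * real N * \<bar>c\<bar>/2 - (t * a - 1) * real N * M)"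
    have "ZQ V W beta N (prob_measures - K) \<le> ennreal (E0 * Ir ^ N)"
      unfolding E0_def Ir_def
      by (rule ZQ_bound[where N=N and t=t and beta=beta and a=a and M=M and e=e and c=c and V=V and W=W and K=K, OF N t_def beta_pos ta M0 e(1) a_def Wb _ V_cont V_int]) (use emp N in blast)
    also have "\<dots> \<le> ennreal (E0 * C ^ N)"
      unfolding C_def E0_def using Ir0 by (intro ennreal_leI mult_left_mono power_mono) auto
    finally have Zle: "ZQ V W beta N (prob_measures - K) \<le> ennreal (E0 * C ^ N)" .
    have pos: "0 < E0 * C ^ N" unfolding E0_def using C1 by simp
    have "ln_ennreal (ZQ V W beta N (prob_measures - K)) \<le> ereal (ln (E0 * C ^ N))"
      by (rule ln_ennreal_bound[OF Zle pos])
    then have "ln_ennreal (ZQ V W beta N (prob_measures - K)) / ereal (beta N) \<le> ereal (ln (E0 * C ^ N) / beta N)"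
      by (rule ereal_div_bound[OF _ beta_pos])
    also have "ln (E0 * C ^ N) / beta N \<le> - L"
    proof -
      have "ln (E0 * C ^ N) = (t * real N * \<bar>c\<bar>/2 - (t * a - 1) * real N * M) + real N * ln C"
        unfolding E0_def using C1 by (simp add: ln_mult ln_realpow)
      then have "ln (E0 * C ^ N) / beta N = \<bar>c\<bar>/2 - a * M + (M + ln C) / t"
        unfolding bt using N tpos by (simp add: field_simps)
      moreover have "(M + ln C) / t \<le> 1" using t1(2) tpos M0 lnC by (simp add: field_simps)
      ultimately show ?thesis using aM by linarith
    qed
    finally show ?case by simp
  qed
  have "Limsup sequentially (\<lambda>N. ln_ennreal (ZQ V W beta N (prob_measures - K)) / ereal (beta N)) \<le> ereal (- L)"
    by (rule Limsup_bounded[OF ev])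
  then show "\<exists>K. K \<subseteq> prob_measures \<and> compactin weak_top K \<and>
           Limsup sequentially
             (\<lambda>N. ln_ennreal (ZQ V W beta N (prob_measures - K)) / ereal (beta N))
           \<le> ereal (- L)" using K by blast
qed


end
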